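(* Fix integers $\nu\ge 2$, $p\ge1$, $H\ge1$, $\sigma>0$, $T>0$, and consider either the asymmetric or the symmetric CP-decomposition model below, trained by gradient flow from an i.i.d. $\mathcal N(0,\sigma^2)$ initialization. Suppose that the target tensor entries $F_{i_1,\ldots,i_\nu}$ can be written as a polynomial (with numerical coefficients) in $H$, $p$, the indices $i_1,\ldots,i_\nu$, and Kronecker deltas $\delta_{i_a=i_b}$ for $a,b\in\{1,\ldots,\nu\}$. Then, for every integer $s\ge 0$, the quantity $T^s\,\mathbb E\big[\tfrac{d^s L}{dt^s}(0)\big]$ is a polynomial in $H$, $p$ and $\sigma^2$.
   Context: Model: for $i_1,\ldots,i_\nu\in\{1,\ldots,p\}$, $f_{i_1,\ldots,i_\nu}=\sum_{k=1}^H\prod_{m=1}^\nu u^{(m)}_{k,i_m}$, with learnable parameters $\mathbf u=(u^{(m)}_{k,i})\in\mathbb R^{H\times p\times\nu}$. In the asymmetric scenario (ASYM) no constraint is imposed; in the symmetric scenario (SYM) the target $F$ is a symmetric tensor and $u^{(1)}_{k,i}=\cdots=u^{(\nu)}_{k,i}=:u_{k,i}$, the free parameters being $u_{k,i}$. Loss: $L(\mathbf u)=\frac12\sum_{i_1,\ldots,i_\nu=1}^p(f_{i_1,\ldots,i_\nu}-F_{i_1,\ldots,i_\nu})^2$. Gradient flow: $\frac{d\mathbf u}{dt}=-\frac1T\partial_{\mathbf u}L(\mathbf u)$, so $\frac{d^sL}{dt^s}(0)$ is a polynomial in the initial weights. Initialization: all free weights at $t=0$ are i.i.d. $\mathcal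 N(0,\sigma^2)$; the expectation is over this initialization. *)

theory Defs
  imports "HOL-Probability.Probability" "HOL-Library.Poly_Mapping"
begin

definition mono_eval :: "('v \<Rightarrow> real) \<Rightarrow> ('v \<Rightarrow>\<^sub>0 nat) \<Rightarrow> real" where
  "mono_eval val m = (\<Prod>v\<in>Poly_Mapping.keys m. val v ^ Poly_Mapping.lookup m v)"

definition poly_eval :: "('v \<Rightarrow> real) \<Rightarrow> (('v \<Rightarrow>\<^sub>0 nat) \<Rightarrow>\<^sub>0 real) \<Rightarrow> real" where
  "poly_eval val P = (\<Sum>m\<in>Poly_Mapping.keys P. Poly_Mapping.lookup P m * mono_eval val m)"

datatype fvar = VarH | Varp | Vari nat | Vdelta nat nat

definition fvar_ok :: "nat \<Rightarrow> fvar \<Rightarrow> bool" where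
  "fvar_ok \<nu> v = (case v of Vari m \<Rightarrow> m \<in> {1..\<nu>}
                     | Vdelta a b \<Rightarrow> a \<in> {1..\<nu>} \<and> b \<in> {1..\<nu>}
                     | _ \<Rightarrow> True)"

definition target_val :: "nat \<Rightarrow> nat \<Rightarrow> (nat \<Rightarrow> nat) \<Rightarrow> fvar \<Rightarrow> real" where
  "target_val H p idx v = (case v of VarH \<Rightarrow> real H | Varp \<Rightarrow> real p
                          | Vari m \<Rightarrow> real (idx m)
                          | Vdelta a b \<Rightarrow> (if idx a = idx b then 1 else 0))"

datatype pvar = PH | Pp | Psigma2

definition pvar_val :: "nat \<Rightarrow> nat \<Rightarrow> real \<Rightarrow> pvar \<Rightarrow> real" where
  "pvar_val H p \<sigma> v = (case v of PH \<Rightarrow> real H | Pp \<Rightarrow> real p | Psigma2 \<Rightarrow> \<sigma>\<^sup>2)"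

datatype scenario = ASYM | SYM

definition tuples :: "nat \<Rightarrow> nat \<Rightarrow> (nat \<Rightarrow> nat) set" where
  "tuples \<nu> p = PiE {1..\<nu>} (\<lambda>_. {1..p})"

(* free parameters: u^{(m)}_{k,i} indexed by (k,i,m); in SYM only m = 1 is used *)
definition params :: "scenario \<Rightarrow> nat \<Rightarrow> nat \<Rightarrow> nat \<Rightarrow> (nat \<times> nat \<times> nat) set" where
  "params sc H p \<nu> = {1..H} \<times> {1..p} \<times> (case sc of ASYM \<Rightarrow> {1..\<nu>} | SYM \<Rightarrow> {1})"

definition weight :: "scenario \<Rightarrow> (nat \<times> nat \<times> nat \<Rightarrow> real) \<Rightarrow> nat \<Rightarrow> nat \<Rightarrow> nat \<Rightarrow> real" where
  "weight sc w k i m = w (k, i, case sc of ASYM \<Rightarrow> m | SYM \<Rightarrow> 1)"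

definition model :: "scenario \<Rightarrow> nat \<Rightarrow> nat \<Rightarrow> (nat \<times> nat \<times> nat \<Rightarrow> real) \<Rightarrow> (nat \<Rightarrow> nat) \<Rightarrow> real" where
  "model sc H \<nu> w idx = (\<Sum>k=1..H. \<Prod>m=1..\<nu>. weight sc w k (idx m) m)"

definition target :: "((fvar \<Rightarrow>\<^sub>0 nat) \<Rightarrow>\<^sub>0 real) \<Rightarrow> nat \<Rightarrow> nat \<Rightarrow> (nat \<Rightarrow> nat) \<Rightarrow> real" where
  "target Q H p idx = poly_eval (target_val H p idx) Q"

definition loss :: "scenario \<Rightarrow> nat \<Rightarrow> nat \<Rightarrow> nat \<Rightarrow> ((fvar \<Rightarrow>\<^sub>0 nat) \<Rightarrow>\<^sub>0 real)
                    \<Rightarrow> (nat \<times> nat \<times> nat \<Rightarrow> real) \<Rightarrow> real" where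
  "loss sc H p \<nu> Q w = 1/2 * (\<Sum>idx\<in>tuples \<nu> p. (model sc H \<nu> w idx - target Q H p idx)\<^sup>2)"

definition sym_tensor :: "nat \<Rightarrow> nat \<Rightarrow> ((nat \<Rightarrow> nat) \<Rightarrow> real) \<Rightarrow> bool" where
  "sym_tensor \<nu> p F = (\<forall>idx\<in>tuples \<nu> p. \<forall>\<pi>. \<pi> permutes {1..\<nu>} \<longrightarrow> F (idx \<circ> \<pi>) = F idx)"

definition partial :: "(('j \<Rightarrow> real) \<Rightarrow> real) \<Rightarrow> ('j \<Rightarrow> real) \<Rightarrow> 'j \<Rightarrow> real" where
  "partial f w j = deriv (\<lambda>x. f (w(j := x))) (w j)"

definition gradient_flow :: "scenario \<Rightarrow> nat \<Rightarrow> nat \<Rightarrow> nat \<Rightarrow> ((fvar \<Rightarrow>\<^sub>0 nat) \<Rightarrow>\<^sub>0 real) \<Rightarrow> real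
     \<Rightarrow> ((nat \<times> nat \<times> nat \<Rightarrow> real) \<Rightarrow> real \<Rightarrow> (nat \<times> nat \<times> nat \<Rightarrow> real)) \<Rightarrow> bool" where
  "gradient_flow sc H p \<nu> Q T \<phi> =
     (\<forall>w. \<phi> w 0 = w \<and>
        (\<exists>\<epsilon>>0. \<forall>t\<in>{-\<epsilon><..<\<epsilon>}. \<forall>j\<in>params sc H p \<nu>.
           ((\<lambda>\<tau>. \<phi> w \<tau> j) has_real_derivative
              (- (1 / T) * partial (loss sc H p \<nu> Q) (\<phi> w t) j)) (at t)))"

definition init_measure :: "scenario \<Rightarrow> nat \<Rightarrow> nat \<Rightarrow> nat \<Rightarrow> real \<Rightarrow> (nat \<times> nat \<times> nat \<Rightarrow> real) measure" where
  "init_measure sc H p \<nu> \<sigma> = PiM (params sc H p \<nu>) (\<lambda>_. density lborel (normal_density 0 \<sigma>))"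

end

theory Submission
  imports Defs
begin


type_synonym gfun = "nat \<Rightarrow> nat \<Rightarrow> real \<Rightarrow> (nat \<Rightarrow> nat) \<Rightarrow> (nat \<Rightarrow> nat) \<Rightarrow> real"

inductive good :: "gfun \<Rightarrow> bool" where
  g_const: "good (\<lambda>H p s eH eP. c)"
| g_H: "good (\<lambda>H p s eH eP. real H)"
| g_p: "good (\<lambda>H p s eH eP. real p)"
| g_s: "good (\<lambda>H p s eH eP. s^2)"
| g_eP: "good (\<lambda>H p s eH eP. real (eP v))"
| g_dH: "good (\<lambda>H p s eH eP. if eH a = eH b then 1 else 0)"
| g_dP: "good (\<lambda>H p s eH eP. if eP a = eP b then 1 else 0)"
| g_add: "good f \<Longrightarrow> good g \<Longrightarrow> good (\<lambda>H p s eH eP. f H p s eH eP + g H p s eH eP)"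
| g_mult: "good f \<Longrightarrow> good g \<Longrightarrow> good (\<lambda>H p s eH eP. f H p s eH eP * g H p s eH eP)"

inductive gmono :: "gfun \<Rightarrow> bool" where
  m_const: "gmono (\<lambda>H p s eH eP. c)"
| m_H: "gmono (\<lambda>H p s eH eP. real H)"
| m_p: "gmono (\<lambda>H p s eH eP. real p)"
| m_s: "gmono (\<lambda>H p s eH eP. s^2)"
| m_eP: "gmono (\<lambda>H p s eH eP. real (eP v))"
| m_dH: "gmono (\<lambda>H p s eH eP. if eH a = eH b then 1 else 0)"
| m_dP: "gmono (\<lambda>H p s eH eP. if eP a = eP b then 1 else 0)"
| m_mult: "gmono f \<Longrightarrow> gmono g \<Longrightarrow> gmono (\<lambda>H p s eH eP. f H p s eH eP * g H p s eH eP)"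

inductive gsum :: "gfun \<Rightarrow> bool" where
  gs_0: "gsum (\<lambda>H p s eH eP. 0)"
| gs_add: "gmono m \<Longrightarrow> gsum f \<Longrightarrow> gsum (\<lambda>H p s eH eP. m H p s eH eP + f H p s eH eP)"

lemma mono_good: "gmono m \<Longrightarrow> good m"
  by (induction rule: gmono.induct) (auto intro: good.intros)

lemma gsum_good: "gsum m \<Longrightarrow> good m"
  by (induction rule: gsum.induct) (auto intro: good.intros mono_good)

lemma gsum_add: "gsum f \<Longrightarrow> gsum g \<Longrightarrow> gsum (\<lambda>H p s eH eP. f H p s eH eP + g H p s eH eP)"
proof (induction rule: gsum.induct)
  case gs_0 then show ?case by simp
next
  case (gs_add m f)
  have "gsum (\<lambda>H p s eH eP. m H p s eH eP + (f H p s eH eP + g H p s eH eP))"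
    by (rule gsum.gs_add[OF gs_add.hyps(1) gs_add.IH[OF gs_add.prems]])
  then show ?case by (simp add: add.assoc)
qed

lemma gsum_mono_mult: "gsum g \<Longrightarrow> gmono m \<Longrightarrow> gsum (\<lambda>H p s eH eP. m H p s eH eP * g H p s eH eP)"
proof (induction rule: gsum.induct)
  case gs_0 then show ?case by (simp add: gsum.gs_0)
next
  case (gs_add m' f)
  have "gsum (\<lambda>H p s eH eP. m H p s eH eP * m' H p s eH eP + m H p s eH eP * f H p s eH eP)"
    using gs_add by (intro gsum.gs_add gmono.m_mult) auto
  then show ?case by (simp add: distrib_left)
qed

lemma gsum_mult: "gsum f \<Longrightarrow> gsum g \<Longrightarrow> gsum (\<lambda>H p s eH eP. f H p s eH eP * g H p s eH eP)"
proof (induction rule: gsum.induct)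
  case gs_0 then show ?case by (simp add: gsum.gs_0)
next
  case (gs_add m f)
  have "gsum (\<lambda>H p s eH eP. m H p s eH eP * g H p s eH eP + f H p s eH eP * g H p s eH eP)"
    by (rule gsum_add[OF gsum_mono_mult[OF gs_add.prems gs_add.hyps(1)] gs_add.IH[OF gs_add.prems]])
  then show ?case by (simp add: distrib_right)
qed

lemma mono_gsum: "gmono m \<Longrightarrow> gsum m"
  using gsum.gs_add[OF _ gsum.gs_0] by simp

lemma good_gsum: "good f \<Longrightarrow> gsum f"
  by (induction rule: good.induct) (auto intro: mono_gsum gmono.intros gsum_add gsum_mult)

lemma mono_reindex: "gmono m \<Longrightarrow> gmono (\<lambda>H p s eH eP. m H p s (eH \<circ> r1) (eP \<circ> r2))"
  by (induction rule: gmono.induct) (auto intro: gmono.intros)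

lemma good_reindex: "good m \<Longrightarrow> good (\<lambda>H p s eH eP. m H p s (eH \<circ> r1) (eP \<circ> r2))"
  by (induction rule: good.induct) (auto intro: good.intros)

lemma good_s0: "good m \<Longrightarrow> good (\<lambda>H p s eH eP. m H p 0 eH eP)"
  by (induction rule: good.induct) (auto intro: good.intros)

lemma mono_splitH: "gmono m \<Longrightarrow>
  (\<exists>u m'. u \<noteq> 0 \<and> gmono m' \<and> (\<forall>H p s eH eP. m H p s eH eP = (if eH 0 = eH u then 1 else 0) * m' H p s eH eP))
  \<or> (\<forall>H p s eH eP x. m H p s (eH(0:=x)) eP = m H p s eH eP)"
proof (induction rule: gmono.induct)
  case (m_dH a b)
  show ?case
  proof (cases "a = 0 \<and> b \<noteq> 0")
    case True
    then show ?thesis by (intro disjI1 exI[of _ b] exI[of _ "\<lambda>H p s eH eP. 1"]) (auto intro: gmono.intros)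
  next
    case F1: False
    show ?thesis
    proof (cases "b = 0 \<and> a \<noteq> 0")
      case True
      then show ?thesis by (intro disjI1 exI[of _ a] exI[of _ "\<lambda>H p s eH eP. 1"]) (auto intro: gmono.intros)
    next
      case False
      with F1 show ?thesis by auto
    qed
  qed
next
  case (m_mult f g)
  from m_mult.IH(1) show ?case
  proof
    assume "\<exists>u m'. u \<noteq> 0 \<and> gmono m' \<and> (\<forall>H p s eH eP. f H p s eH eP = (if eH 0 = eH u then 1 else 0) * m' H p s eH eP)"
    then obtain u m' where u: "u \<noteq> 0" "gmono m'" "\<forall>H p s eH eP. f H p s eH eP = (if eH 0 = eH u then 1 else 0) * m' H p s eH eP" by blast
    show ?case
      by (intro disjI1 exI[of _ u] exI[of _ "\<lambda>H p s eH eP. m' H p s eH eP * g H p s eH eP"])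
         (use u m_mult.hyps in \<open>auto intro: gmono.intros\<close>)
  next
    assume f: "\<forall>H p s eH eP x. f H p s (eH(0:=x)) eP = f H p s eH eP"
    from m_mult.IH(2) show ?case
    proof
      assume "\<exists>u m'. u \<noteq> 0 \<and> gmono m' \<and> (\<forall>H p s eH eP. g H p s eH eP = (if eH 0 = eH u then 1 else 0) * m' H p s eH eP)"
      then obtain u m' where u: "u \<noteq> 0" "gmono m'" "\<forall>H p s eH eP. g H p s eH eP = (if eH 0 = eH u then 1 else 0) * m' H p s eH eP" by blast
      show ?case
        by (intro disjI1 exI[of _ u] exI[of _ "\<lambda>H p s eH eP. f H p s eH eP * m' H p s eH eP"])
           (use u m_mult.hyps in \<open>auto intro: gmono.intros\<close>)
    next
      assume g: "\<forall>H p s eH eP x. g H p s (eH(0:=x)) eP = g H p s eH eP"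
      show ?case apply (rule disjI2) using f g by (simp add: fun_upd_def)
    qed
  qed
qed auto

lemma mono_splitP: "gmono m \<Longrightarrow>
  (\<exists>u m'. u \<noteq> 0 \<and> gmono m' \<and> (\<forall>H p s eH eP. m H p s eH eP = (if eP 0 = eP u then 1 else 0) * m' H p s eH eP))
  \<or> (\<exists>n m'. gmono m' \<and> (\<forall>H p s eH eP x. m' H p s eH (eP(0:=x)) = m' H p s eH eP)
         \<and> (\<forall>H p s eH eP. m H p s eH eP = real (eP 0) ^ n * m' H p s eH eP))"
proof (induction rule: gmono.induct)
  case (m_const c)
  show ?case by (intro disjI2 exI[of _ 0] exI[of _ "\<lambda>H p s eH eP. c"]) (auto intro: gmono.intros)
next
  case m_H
  show ?case by (intro disjI2 exI[of _ 0] exI[of _ "\<lambda>H p s eH eP. real H"]) (auto intro: gmono.intros)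
next
  case m_p
  show ?case by (intro disjI2 exI[of _ 0] exI[of _ "\<lambda>H p s eH eP. real p"]) (auto intro: gmono.intros)
next
  case m_s
  show ?case by (intro disjI2 exI[of _ 0] exI[of _ "\<lambda>H p s eH eP. s^2"]) (auto intro: gmono.intros)
next
  case (m_eP v)
  show ?case
  proof (cases "v = 0")
    case True
    then show ?thesis by (intro disjI2 exI[of _ 1] exI[of _ "\<lambda>H p s eH eP. 1"]) (auto intro: gmono.intros)
  next
    case False
    then show ?thesis by (intro disjI2 exI[of _ 0] exI[of _ "\<lambda>H p s eH eP. real (eP v)"]) (auto intro: gmono.intros)
  qed
next
  case (m_dH a b)
  show ?case by (intro disjI2 exI[of _ 0] exI[of _ "\<lambda>H p s eH eP. if eH a = eH b then 1 else 0"]) (auto intro: gmono.intros)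
next
  case (m_dP a b)
  show ?case
  proof (cases "a = 0 \<and> b \<noteq> 0")
    case True
    then show ?thesis by (intro disjI1 exI[of _ b] exI[of _ "\<lambda>H p s eH eP. 1"]) (auto intro: gmono.intros)
  next
    case F1: False
    show ?thesis
    proof (cases "b = 0 \<and> a \<noteq> 0")
      case True
      then show ?thesis by (intro disjI1 exI[of _ a] exI[of _ "\<lambda>H p s eH eP. 1"]) (auto intro: gmono.intros)
    next
      case False
      with F1 show ?thesis
        by (intro disjI2 exI[of _ 0] exI[of _ "\<lambda>H p s eH eP. if eP a = eP b then 1 else 0"]) (auto intro: gmono.intros)
    qed
  qed
next
  case (m_mult f g)
  from m_mult.IH(1) show ?case
  proof
    assume "\<exists>u m'. u \<noteq> 0 \<and> gmono m' \<and> (\<forall>H p s eH eP. f H p s eH eP = (if eP 0 = eP u then 1 else 0) * m' H p s eH eP)"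
    then obtain u m' where u: "u \<noteq> 0" "gmono m'" "\<forall>H p s eH eP. f H p s eH eP = (if eP 0 = eP u then 1 else 0) * m' H p s eH eP" by blast
    show ?case
      by (intro disjI1 exI[of _ u] exI[of _ "\<lambda>H p s eH eP. m' H p s eH eP * g H p s eH eP"])
         (use u m_mult.hyps in \<open>auto intro: gmono.intros\<close>)
  next
    assume "\<exists>n m'. gmono m' \<and> (\<forall>H p s eH eP x. m' H p s eH (eP(0:=x)) = m' H p s eH eP)
         \<and> (\<forall>H p s eH eP. f H p s eH eP = real (eP 0) ^ n * m' H p s eH eP)"
    then obtain n1 f' where f: "gmono f'" "\<forall>H p s eH eP x. f' H p s eH (eP(0:=x)) = f' H p s eH eP"
         "\<forall>H p s eH eP. f H p s eH eP = real (eP 0) ^ n1 * f' H p s eH eP" by blast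
    from m_mult.IH(2) show ?case
    proof
      assume "\<exists>u m'. u \<noteq> 0 \<and> gmono m' \<and> (\<forall>H p s eH eP. g H p s eH eP = (if eP 0 = eP u then 1 else 0) * m' H p s eH eP)"
      then obtain u m' where u: "u \<noteq> 0" "gmono m'" "\<forall>H p s eH eP. g H p s eH eP = (if eP 0 = eP u then 1 else 0) * m' H p s eH eP" by blast
      show ?case
        by (intro disjI1 exI[of _ u] exI[of _ "\<lambda>H p s eH eP. f H p s eH eP * m' H p s eH eP"])
           (use u m_mult.hyps in \<open>auto intro: gmono.intros\<close>)
    next
      assume "\<exists>n m'. gmono m' \<and> (\<forall>H p s eH eP x. m' H p s eH (eP(0:=x)) = m' H p s eH eP)
         \<and> (\<forall>H p s eH eP. g H p s eH eP = real (eP 0) ^ n * m' H p s eH eP)"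
      then obtain n2 g' where g: "gmono g'" "\<forall>H p s eH eP x. g' H p s eH (eP(0:=x)) = g' H p s eH eP"
         "\<forall>H p s eH eP. g H p s eH eP = real (eP 0) ^ n2 * g' H p s eH eP" by blast
      show ?case
        by (intro disjI2 exI[of _ "n1+n2"] exI[of _ "\<lambda>H p s eH eP. f' H p s eH eP * g' H p s eH eP"])
           (use f g in \<open>auto intro: gmono.intros simp: power_add fun_upd_def\<close>)
    qed
  qed
qed



definition wfe :: "nat \<Rightarrow> (nat \<Rightarrow> nat) \<Rightarrow> bool" where
  "wfe N e \<longleftrightarrow> (\<forall>i. e i \<in> {1..N})"

lemma wfe_push: "wfe N e \<Longrightarrow> x \<in> {1..N} \<Longrightarrow> wfe N (case_nat x e)"
  unfolding wfe_def by (auto split: nat.splits)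

lemma wfe_reindex: "wfe N e \<Longrightarrow> wfe N (e \<circ> r)"
  unfolding wfe_def by auto

lemma good_sum: "finite A \<Longrightarrow> (\<forall>j\<in>A. good (f j)) \<Longrightarrow> good (\<lambda>H p s eH eP. \<Sum>j\<in>A. f j H p s eH eP)"
proof (induction rule: finite_induct)
  case empty then show ?case by (simp add: g_const)
next
  case (insert x F)
  then show ?case by (simp add: g_add)
qed

lemma good_pow: "good f \<Longrightarrow> good (\<lambda>H p s eH eP. f H p s eH eP ^ n)"
proof (induction n)
  case 0 then show ?case by (simp add: g_const)
next
  case (Suc n) then show ?case using g_mult[of f] by simp
qed

lemma binom_step: "((y::real) + 1) ^ (n+1) - y ^ (n+1) = real (n+1) * y ^ n + (\<Sum>j<n. real ((n+1) choose j) * y ^ j)"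
proof -
  have "(y + 1) ^ (n+1) = (\<Sum>k\<le>n+1. real ((n+1) choose k) * y ^ k * 1 ^ (n+1-k))"
    by (rule binomial_ring)
  also have "\<dots> = (\<Sum>k<n+2. real ((n+1) choose k) * y ^ k)"
    by (simp add: lessThan_Suc_atMost[symmetric])
  also have "\<dots> = (\<Sum>k<n. real ((n+1) choose k) * y ^ k) + real (n+1) * y ^ n + y ^ (n+1)"
    by (simp add: numeral_2_eq_2)
  finally show ?thesis by simp
qed

lemma powsum_rec: "real (n+1) * (\<Sum>x=1..p. real x ^ n) = (real p + 1)^(n+1) - 1 - (\<Sum>j<n. real ((n+1) choose j) * (\<Sum>x=1..p. real x ^ j))"
proof (induction p)
  case 0 then show ?case by simp
next
  case (Suc p)
  have "real (n+1) * (\<Sum>x=1..Suc p. real x ^ n) = real (n+1) * (\<Sum>x=1..p. real x ^ n) + real (n+1) * (real p + 1) ^ n"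
    by (simp add: distrib_left add.commute)
  also have "\<dots> = (real p + 1)^(n+1) - 1 - (\<Sum>j<n. real ((n+1) choose j) * (\<Sum>x=1..p. real x ^ j)) + real (n+1) * (real p + 1) ^ n"
    using Suc by simp
  also have "real (n+1) * (real p + 1) ^ n = (real p + 1 + 1) ^ (n+1) - (real p + 1) ^ (n+1) - (\<Sum>j<n. real ((n+1) choose j) * (real p + 1) ^ j)"
    using binom_step[of "real p + 1" n] by simp
  finally show ?case
    by (simp add: sum_subtractf[symmetric] distrib_left sum.distrib algebra_simps)
qed

lemma good_powsum: "good (\<lambda>H p s eH eP. \<Sum>x=1..p. real x ^ n)"
proof (induction n rule: less_induct)
  case (less n)
  have eq: "(\<Sum>x=1..p. real x ^ n) = ((real p + 1)^(n+1) - 1 - (\<Sum>j<n. real ((n+1) choose j) * (\<Sum>x=1..p. real x ^ j))) / real (n+1)" for p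
    using powsum_rec[of n p] by (simp add: field_simps)
  have g1: "good (\<lambda>H p s eH eP. (real p + 1)^(n+1))"
    by (intro good_pow g_add g_p g_const)
  have g2: "good (\<lambda>H p s eH eP. \<Sum>j<n. real ((n+1) choose j) * (\<Sum>x=1..p. real x ^ j))"
    using less by (intro good_sum) (auto intro!: g_mult g_const)
  have "good (\<lambda>H p s eH eP. ((real p + 1)^(n+1) + (-1) + (-1) * (\<Sum>j<n. real ((n+1) choose j) * (\<Sum>x=1..p. real x ^ j))) * (1 / real (n+1)))"
    by (intro g_mult g_add g1 g2 g_const)
  then show ?case unfolding eq by (simp add: field_simps)
qed

lemma sum_delta_mult: "finite A \<Longrightarrow> (\<Sum>x\<in>A. (if x = c then 1 else 0) * (f x::real)) = (if c \<in> A then f c else 0)"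
proof -
  assume "finite A"
  have "(\<Sum>x\<in>A. (if x = c then 1 else 0) * f x) = (\<Sum>x\<in>A. if x = c then f x else 0)"
    by (intro sum.cong) auto
  then show ?thesis using \<open>finite A\<close> by simp
qed

lemma push_eq_reindex: "case_nat (e u) e = e \<circ> case_nat u id"
  by (rule ext) (simp split: nat.splits)

lemma push_upd: "case_nat x e = (e \<circ> case_nat 0 id)(0 := x)"
  by (rule ext) (simp split: nat.splits)

lemma mono_sumH: "gmono m \<Longrightarrow> \<exists>g. good g \<and> (\<forall>H p s eH eP. wfe H eH \<longrightarrow> (\<Sum>x=1..H. m H p s (case_nat x eH) eP) = g H p s eH eP)"
proof -
  assume m: "gmono m"
  from mono_splitH[OF m] show ?thesis
  proof
    assume "\<exists>u m'. u \<noteq> 0 \<and> gmono m' \<and> (\<forall>H p s eH eP. m H p s eH eP = (if eH 0 = eH u then 1 else 0) * m' H p s eH eP)"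
    then obtain u m' where u: "u \<noteq> 0" "gmono m'" "\<And>H p s eH eP. m H p s eH eP = (if eH 0 = eH u then 1 else 0) * m' H p s eH eP" by blast
    have gg: "good (\<lambda>H p s eH eP. m' H p s (eH \<circ> case_nat (u-1) id) (eP \<circ> id))"
      by (intro mono_good mono_reindex u(2))
    show ?thesis
    proof (intro exI conjI allI impI)
      show "good (\<lambda>H p s eH eP. m' H p s (eH \<circ> case_nat (u-1) id) eP)" using gg by simp
      fix H p s eH eP assume wf: "wfe H eH"
      have cu: "case_nat x eH u = eH (u-1)" for x using u(1) by (cases u) auto
      have "(\<Sum>x=1..H. m H p s (case_nat x eH) eP) = (\<Sum>x=1..H. (if x = eH (u-1) then 1 else 0) * m' H p s (case_nat x eH) eP)"
        by (intro sum.cong refl) (simp add: u(3) cu)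
      also have "\<dots> = m' H p s (case_nat (eH (u-1)) eH) eP"
        using wf by (subst sum_delta_mult) (auto simp: wfe_def)
      also have "\<dots> = m' H p s (eH \<circ> case_nat (u-1) id) eP" by (simp add: push_eq_reindex)
      finally show "(\<Sum>x=1..H. m H p s (case_nat x eH) eP) = m' H p s (eH \<circ> case_nat (u-1) id) eP" .
    qed
  next
    assume ind: "\<forall>H p s eH eP x. m H p s (eH(0:=x)) eP = m H p s eH eP"
    have gg: "good (\<lambda>H p s eH eP. m H p s (eH \<circ> case_nat 0 id) (eP \<circ> id))"
      by (intro mono_good mono_reindex m)
    show ?thesis
    proof (intro exI conjI allI impI)
      show "good (\<lambda>H p s eH eP. real H * m H p s (eH \<circ> case_nat 0 id) eP)" using g_mult[OF g_H gg] by simp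
      fix H p s eH eP assume wf: "wfe H eH"
      have "(\<Sum>x=1..H. m H p s (case_nat x eH) eP) = (\<Sum>x=1..H. m H p s (eH \<circ> case_nat 0 id) eP)"
        by (intro sum.cong refl) (metis ind push_upd)
      then show "(\<Sum>x=1..H. m H p s (case_nat x eH) eP) = real H * m H p s (eH \<circ> case_nat 0 id) eP" by simp
    qed
  qed
qed

lemma mono_sumP: "gmono m \<Longrightarrow> \<exists>g. good g \<and> (\<forall>H p s eH eP. wfe p eP \<longrightarrow> (\<Sum>x=1..p. m H p s eH (case_nat x eP)) = g H p s eH eP)"
proof -
  assume m: "gmono m"
  from mono_splitP[OF m] show ?thesis
  proof
    assume "\<exists>u m'. u \<noteq> 0 \<and> gmono m' \<and> (\<forall>H p s eH eP. m H p s eH eP = (if eP 0 = eP u then 1 else 0) * m' H p s eH eP)"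
    then obtain u m' where u: "u \<noteq> 0" "gmono m'" "\<And>H p s eH eP. m H p s eH eP = (if eP 0 = eP u then 1 else 0) * m' H p s eH eP" by blast
    have gg: "good (\<lambda>H p s eH eP. m' H p s (eH \<circ> id) (eP \<circ> case_nat (u-1) id))"
      by (intro mono_good mono_reindex u(2))
    show ?thesis
    proof (intro exI conjI allI impI)
      show "good (\<lambda>H p s eH eP. m' H p s eH (eP \<circ> case_nat (u-1) id))" using gg by simp
      fix H p s eH eP assume wf: "wfe p eP"
      have cu: "case_nat x eP u = eP (u-1)" for x using u(1) by (cases u) auto
      have "(\<Sum>x=1..p. m H p s eH (case_nat x eP)) = (\<Sum>x=1..p. (if x = eP (u-1) then 1 else 0) * m' H p s eH (case_nat x eP))"
        by (intro sum.cong refl) (simp add: u(3) cu)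
      also have "\<dots> = m' H p s eH (case_nat (eP (u-1)) eP)"
        using wf by (subst sum_delta_mult) (auto simp: wfe_def)
      also have "\<dots> = m' H p s eH (eP \<circ> case_nat (u-1) id)" by (simp add: push_eq_reindex)
      finally show "(\<Sum>x=1..p. m H p s eH (case_nat x eP)) = m' H p s eH (eP \<circ> case_nat (u-1) id)" .
    qed
  next
    assume "\<exists>n m'. gmono m' \<and> (\<forall>H p s eH eP x. m' H p s eH (eP(0:=x)) = m' H p s eH eP)
         \<and> (\<forall>H p s eH eP. m H p s eH eP = real (eP 0) ^ n * m' H p s eH eP)"
    then obtain n m' where u: "gmono m'" "\<And>H p s eH eP x. m' H p s eH (eP(0:=x)) = m' H p s eH eP"
      "\<And>H p s eH eP. m H p s eH eP = real (eP 0) ^ n * m' H p s eH eP" by blast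
    have gg: "good (\<lambda>H p s eH eP. m' H p s (eH \<circ> id) (eP \<circ> case_nat 0 id))"
      by (intro mono_good mono_reindex u(1))
    show ?thesis
    proof (intro exI conjI allI impI)
      show "good (\<lambda>H p s eH eP. (\<Sum>x=1..p. real x ^ n) * m' H p s eH (eP \<circ> case_nat 0 id))"
        using g_mult[OF good_powsum gg] by simp
      fix H p s eH eP assume wf: "wfe p eP"
      have "(\<Sum>x=1..p. m H p s eH (case_nat x eP)) = (\<Sum>x=1..p. real x ^ n * m' H p s eH (eP \<circ> case_nat 0 id))"
        by (intro sum.cong refl) (metis u(2,3) push_upd nat.simps(4))
      then show "(\<Sum>x=1..p. m H p s eH (case_nat x eP)) = (\<Sum>x=1..p. real x ^ n) * m' H p s eH (eP \<circ> case_nat 0 id)"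
        by (simp add: sum_distrib_right)
    qed
  qed
qed

lemma gsum_sumH: "gsum f \<Longrightarrow> \<exists>g. good g \<and> (\<forall>H p s eH eP. wfe H eH \<longrightarrow> (\<Sum>x=1..H. f H p s (case_nat x eH) eP) = g H p s eH eP)"
proof (induction rule: gsum.induct)
  case gs_0 then show ?case by (intro exI[of _ "\<lambda>H p s eH eP. 0"]) (auto intro: g_const)
next
  case (gs_add m f)
  obtain g1 where g1: "good g1" "\<forall>H p s eH eP. wfe H eH \<longrightarrow> (\<Sum>x=1..H. m H p s (case_nat x eH) eP) = g1 H p s eH eP"
    using mono_sumH[OF gs_add.hyps(1)] by blast
  obtain g2 where g2: "good g2" "\<forall>H p s eH eP. wfe H eH \<longrightarrow> (\<Sum>x=1..H. f H p s (case_nat x eH) eP) = g2 H p s eH eP"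
    using gs_add.IH by blast
  show ?case
    by (intro exI[of _ "\<lambda>H p s eH eP. g1 H p s eH eP + g2 H p s eH eP"])
       (use g1 g2 in \<open>auto intro: g_add simp: sum.distrib\<close>)
qed

lemma gsum_sumP: "gsum f \<Longrightarrow> \<exists>g. good g \<and> (\<forall>H p s eH eP. wfe p eP \<longrightarrow> (\<Sum>x=1..p. f H p s eH (case_nat x eP)) = g H p s eH eP)"
proof (induction rule: gsum.induct)
  case gs_0 then show ?case by (intro exI[of _ "\<lambda>H p s eH eP. 0"]) (auto intro: g_const)
next
  case (gs_add m f)
  obtain g1 where g1: "good g1" "\<forall>H p s eH eP. wfe p eP \<longrightarrow> (\<Sum>x=1..p. m H p s eH (case_nat x eP)) = g1 H p s eH eP"
    using mono_sumP[OF gs_add.hyps(1)] by blast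
  obtain g2 where g2: "good g2" "\<forall>H p s eH eP. wfe p eP \<longrightarrow> (\<Sum>x=1..p. f H p s eH (case_nat x eP)) = g2 H p s eH eP"
    using gs_add.IH by blast
  show ?case
    by (intro exI[of _ "\<lambda>H p s eH eP. g1 H p s eH eP + g2 H p s eH eP"])
       (use g1 g2 in \<open>auto intro: g_add simp: sum.distrib\<close>)
qed

definition goodish :: "gfun \<Rightarrow> bool" where
  "goodish f \<longleftrightarrow> (\<exists>g. good g \<and> (\<forall>H p s eH eP. 1 \<le> H \<longrightarrow> 1 \<le> p \<longrightarrow> 0 < s \<longrightarrow> wfe H eH \<longrightarrow> wfe p eP
        \<longrightarrow> f H p s eH eP = g H p s eH eP))"

lemma good_goodish: "good f \<Longrightarrow> goodish f"
  unfolding goodish_def by blast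

lemma goodish_add: "goodish f \<Longrightarrow> goodish g \<Longrightarrow> goodish (\<lambda>H p s eH eP. f H p s eH eP + g H p s eH eP)"
  unfolding goodish_def
proof (elim exE conjE)
  fix f' g' assume "good f'" "good g'" and f: "\<forall>H p s eH eP. 1 \<le> H \<longrightarrow> 1 \<le> p \<longrightarrow> 0 < s \<longrightarrow> wfe H eH \<longrightarrow> wfe p eP \<longrightarrow> f H p s eH eP = f' H p s eH eP"
    and g: "\<forall>H p s eH eP. 1 \<le> H \<longrightarrow> 1 \<le> p \<longrightarrow> 0 < s \<longrightarrow> wfe H eH \<longrightarrow> wfe p eP \<longrightarrow> g H p s eH eP = g' H p s eH eP"
  then show "\<exists>h. good h \<and> (\<forall>H p s eH eP. 1 \<le> H \<longrightarrow> 1 \<le> p \<longrightarrow> 0 < s \<longrightarrow> wfe H eH \<longrightarrow> wfe p eP \<longrightarrow> f H p s eH eP + g H p s eH eP = h H p s eH eP)"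
    by (intro exI[of _ "\<lambda>H p s eH eP. f' H p s eH eP + g' H p s eH eP"]) (auto intro: g_add)
qed

lemma goodish_mult: "goodish f \<Longrightarrow> goodish g \<Longrightarrow> goodish (\<lambda>H p s eH eP. f H p s eH eP * g H p s eH eP)"
  unfolding goodish_def
proof (elim exE conjE)
  fix f' g' assume "good f'" "good g'" and f: "\<forall>H p s eH eP. 1 \<le> H \<longrightarrow> 1 \<le> p \<longrightarrow> 0 < s \<longrightarrow> wfe H eH \<longrightarrow> wfe p eP \<longrightarrow> f H p s eH eP = f' H p s eH eP"
    and g: "\<forall>H p s eH eP. 1 \<le> H \<longrightarrow> 1 \<le> p \<longrightarrow> 0 < s \<longrightarrow> wfe H eH \<longrightarrow> wfe p eP \<longrightarrow> g H p s eH eP = g' H p s eH eP"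
  then show "\<exists>h. good h \<and> (\<forall>H p s eH eP. 1 \<le> H \<longrightarrow> 1 \<le> p \<longrightarrow> 0 < s \<longrightarrow> wfe H eH \<longrightarrow> wfe p eP \<longrightarrow> f H p s eH eP * g H p s eH eP = h H p s eH eP)"
    by (intro exI[of _ "\<lambda>H p s eH eP. f' H p s eH eP * g' H p s eH eP"]) (auto intro: g_mult)
qed

lemma goodish_sum: "finite A \<Longrightarrow> (\<forall>j\<in>A. goodish (f j)) \<Longrightarrow> goodish (\<lambda>H p s eH eP. \<Sum>j\<in>A. f j H p s eH eP)"
proof (induction rule: finite_induct)
  case empty then show ?case by (simp add: good_goodish g_const)
next
  case (insert x F)
  then show ?case by (simp add: goodish_add)
qed

lemma goodish_cong: "goodish f \<Longrightarrow> (\<And>H p s eH eP. 1 \<le> H \<Longrightarrow> 1 \<le> p \<Longrightarrow> 0 < s \<Longrightarrow> wfe H eH \<Longrightarrow> wfe p eP \<Longrightarrow> f H p s eH eP = g H p s eH eP) \<Longrightarrow> goodish g"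
  unfolding goodish_def by metis

lemma goodish_sumH: "goodish f \<Longrightarrow> goodish (\<lambda>H p s eH eP. \<Sum>x=1..H. f H p s (case_nat x eH) eP)"
proof -
  assume "goodish f"
  then obtain f' where f': "good f'" "\<And>H p s eH eP. 1 \<le> H \<Longrightarrow> 1 \<le> p \<Longrightarrow> 0 < s \<Longrightarrow> wfe H eH \<Longrightarrow> wfe p eP \<Longrightarrow> f H p s eH eP = f' H p s eH eP"
    unfolding goodish_def by blast
  obtain g where g: "good g" "\<forall>H p s eH eP. wfe H eH \<longrightarrow> (\<Sum>x=1..H. f' H p s (case_nat x eH) eP) = g H p s eH eP"
    using gsum_sumH[OF good_gsum[OF f'(1)]] by blast
  show ?thesis unfolding goodish_def
  proof (intro exI[of _ g] conjI allI impI)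
    fix H p s eH eP assume a: "1 \<le> H" "1 \<le> (p::nat)" "0 < (s::real)" "wfe H eH" "wfe p eP"
    have "(\<Sum>x=1..H. f H p s (case_nat x eH) eP) = (\<Sum>x=1..H. f' H p s (case_nat x eH) eP)"
      using a by (intro sum.cong refl f'(2)) (auto intro: wfe_push)
    then show "(\<Sum>x=1..H. f H p s (case_nat x eH) eP) = g H p s eH eP" using g a by simp
  qed (fact g)
qed

lemma goodish_sumP: "goodish f \<Longrightarrow> goodish (\<lambda>H p s eH eP. \<Sum>x=1..p. f H p s eH (case_nat x eP))"
proof -
  assume "goodish f"
  then obtain f' where f': "good f'" "\<And>H p s eH eP. 1 \<le> H \<Longrightarrow> 1 \<le> p \<Longrightarrow> 0 < s \<Longrightarrow> wfe H eH \<Longrightarrow> wfe p eP \<Longrightarrow> f H p s eH eP = f' H p s eH eP"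
    unfolding goodish_def by blast
  obtain g where g: "good g" "\<forall>H p s eH eP. wfe p eP \<longrightarrow> (\<Sum>x=1..p. f' H p s eH (case_nat x eP)) = g H p s eH eP"
    using gsum_sumP[OF good_gsum[OF f'(1)]] by blast
  show ?thesis unfolding goodish_def
  proof (intro exI[of _ g] conjI allI impI)
    fix H p s eH eP assume a: "1 \<le> (H::nat)" "1 \<le> (p::nat)" "0 < (s::real)" "wfe H eH" "wfe p eP"
    have "(\<Sum>x=1..p. f H p s eH (case_nat x eP)) = (\<Sum>x=1..p. f' H p s eH (case_nat x eP))"
      using a by (intro sum.cong refl f'(2)) (auto intro: wfe_push)
    then show "(\<Sum>x=1..p. f H p s eH (case_nat x eP)) = g H p s eH eP" using g a by simp
  qed (fact g)
qed



lemma poly_eval_superset: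
  assumes "finite S" "Poly_Mapping.keys P \<subseteq> S"
  shows "poly_eval val P = (\<Sum>m\<in>S. Poly_Mapping.lookup P m * mono_eval val m)"
  unfolding poly_eval_def
  by (rule sum.mono_neutral_left) (use assms in \<open>auto simp: not_in_keys_iff_lookup_eq_zero\<close>)

lemma mono_eval_superset:
  assumes "finite S" "Poly_Mapping.keys m \<subseteq> S"
  shows "mono_eval val m = (\<Prod>v\<in>S. val v ^ Poly_Mapping.lookup m v)"
  unfolding mono_eval_def
  by (rule prod.mono_neutral_left) (use assms in \<open>auto simp: not_in_keys_iff_lookup_eq_zero\<close>)

lemma poly_eval_add: "poly_eval val (P + Q) = poly_eval val P + poly_eval val Q"
proof -
  let ?S = "Poly_Mapping.keys P \<union> Poly_Mapping.keys Q"
  have "poly_eval val (P + Q) = (\<Sum>m\<in>?S. Poly_Mapping.lookup (P+Q) m * mono_eval val m)"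
    by (rule poly_eval_superset) (auto dest: keys_add[THEN subsetD])
  also have "\<dots> = (\<Sum>m\<in>?S. Poly_Mapping.lookup P m * mono_eval val m) + (\<Sum>m\<in>?S. Poly_Mapping.lookup Q m * mono_eval val m)"
    by (simp add: lookup_add distrib_right sum.distrib)
  also have "\<dots> = poly_eval val P + poly_eval val Q"
    by (subst (1 2) poly_eval_superset[of ?S]) auto
  finally show ?thesis .
qed

lemma poly_eval_zero: "poly_eval val 0 = 0"
  by (simp add: poly_eval_def)

lemma poly_eval_sum: "finite A \<Longrightarrow> poly_eval val (\<Sum>i\<in>A. P i) = (\<Sum>i\<in>A. poly_eval val (P i))"
  by (induction rule: finite_induct) (auto simp: poly_eval_zero poly_eval_add)

lemma poly_eval_single: "poly_eval val (Poly_Mapping.single m c) = c * mono_eval val m"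
  by (simp add: poly_eval_def)

lemma mono_eval_add: "mono_eval val (m1 + m2) = mono_eval val m1 * mono_eval val m2"
proof -
  let ?S = "Poly_Mapping.keys m1 \<union> Poly_Mapping.keys m2"
  have "mono_eval val (m1 + m2) = (\<Prod>v\<in>?S. val v ^ Poly_Mapping.lookup (m1+m2) v)"
    by (rule mono_eval_superset) (auto dest: keys_add[THEN subsetD])
  also have "\<dots> = (\<Prod>v\<in>?S. val v ^ Poly_Mapping.lookup m1 v) * (\<Prod>v\<in>?S. val v ^ Poly_Mapping.lookup m2 v)"
    by (simp add: lookup_add power_add prod.distrib)
  also have "\<dots> = mono_eval val m1 * mono_eval val m2"
    by (subst (1 2) mono_eval_superset[of ?S]) auto
  finally show ?thesis .
qed

lemma mono_eval_zero: "mono_eval val 0 = 1"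
  by (simp add: mono_eval_def)

lemma mono_eval_var: "mono_eval val (Poly_Mapping.single v 1) = val v"
  by (simp add: mono_eval_def)

definition polyexp :: "(nat \<Rightarrow> nat \<Rightarrow> real \<Rightarrow> real) \<Rightarrow> bool" where
  "polyexp f \<longleftrightarrow> (\<exists>P. \<forall>H p s. f H p s = poly_eval (pvar_val H p s) P)"

lemma polyexp_const: "polyexp (\<lambda>H p s. c)"
  unfolding polyexp_def
  by (intro exI[of _ "Poly_Mapping.single 0 c"]) (simp add: poly_eval_single mono_eval_zero)

lemma polyexp_var: "polyexp (\<lambda>H p s. pvar_val H p s v)"
  unfolding polyexp_def
  apply (intro exI[of _ "Poly_Mapping.single (Poly_Mapping.single v 1) 1"] allI)
  apply (subst poly_eval_single)
  apply (subst mono_eval_var)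
  by simp

lemma polyexp_add: "polyexp f \<Longrightarrow> polyexp g \<Longrightarrow> polyexp (\<lambda>H p s. f H p s + g H p s)"
  unfolding polyexp_def by (metis poly_eval_add)

lemma polyexp_mult: "polyexp f \<Longrightarrow> polyexp g \<Longrightarrow> polyexp (\<lambda>H p s. f H p s * g H p s)"
proof -
  assume "polyexp f" "polyexp g"
  then obtain P Q where P: "\<And>H p s. f H p s = poly_eval (pvar_val H p s) P"
    and Q: "\<And>H p s. g H p s = poly_eval (pvar_val H p s) Q" unfolding polyexp_def by blast
  define R where "R = (\<Sum>m1\<in>Poly_Mapping.keys P. \<Sum>m2\<in>Poly_Mapping.keys Q.
      Poly_Mapping.single (m1 + m2) (Poly_Mapping.lookup P m1 * Poly_Mapping.lookup Q m2))"
  show ?thesis unfolding polyexp_def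
  proof (intro exI[of _ R] allI)
    fix H p s
    let ?v = "pvar_val H p s"
    have "poly_eval ?v R = (\<Sum>m1\<in>Poly_Mapping.keys P. \<Sum>m2\<in>Poly_Mapping.keys Q.
        Poly_Mapping.lookup P m1 * Poly_Mapping.lookup Q m2 * (mono_eval ?v m1 * mono_eval ?v m2))"
      unfolding R_def by (simp add: poly_eval_sum poly_eval_single mono_eval_add)
    also have "\<dots> = poly_eval ?v P * poly_eval ?v Q"
      unfolding poly_eval_def sum_product by (intro sum.cong refl) (simp add: ac_simps)
    finally show "f H p s * g H p s = poly_eval ?v R" using P Q by simp
  qed
qed

lemma good_polyexp: "good g \<Longrightarrow> polyexp (\<lambda>H p s. g H p s (\<lambda>_. 1) (\<lambda>_. 1))"
proof (induction rule: good.induct)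
  case g_H then show ?case using polyexp_var[of PH] by (simp add: pvar_val_def)
next
  case g_p then show ?case using polyexp_var[of Pp] by (simp add: pvar_val_def)
next
  case g_s then show ?case using polyexp_var[of Psigma2] by (simp add: pvar_val_def)
qed (auto intro: polyexp_const polyexp_add polyexp_mult)



type_synonym wfun = "nat \<Rightarrow> nat \<Rightarrow> (nat \<Rightarrow> nat) \<Rightarrow> (nat \<Rightarrow> nat) \<Rightarrow> (nat \<times> nat \<times> nat \<Rightarrow> real) \<Rightarrow> real"

inductive Wt :: "nat set \<Rightarrow> wfun \<Rightarrow> bool" for Ms where
  W_c: "good g \<Longrightarrow> Wt Ms (\<lambda>H p eH eP w. g H p 0 eH eP)"
| W_cm: "good g \<Longrightarrow> Wt Ms F \<Longrightarrow> Wt Ms (\<lambda>H p eH eP w. g H p 0 eH eP * F H p eH eP w)"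
| W_a: "m \<in> Ms \<Longrightarrow> Wt Ms F \<Longrightarrow> Wt Ms (\<lambda>H p eH eP w. w (eH a, eP b, m) * F H p eH eP w)"
| W_p: "Wt Ms F \<Longrightarrow> Wt Ms G \<Longrightarrow> Wt Ms (\<lambda>H p eH eP w. F H p eH eP w + G H p eH eP w)"
| W_sH: "Wt Ms F \<Longrightarrow> Wt Ms (\<lambda>H p eH eP w. \<Sum>x=1..H. F H p (case_nat x eH) eP w)"
| W_sP: "Wt Ms F \<Longrightarrow> Wt Ms (\<lambda>H p eH eP w. \<Sum>x=1..p. F H p eH (case_nat x eP) w)"

lemma Wt_cong: "Wt Ms F \<Longrightarrow> (\<And>H p eH eP w. F H p eH eP w = G H p eH eP w) \<Longrightarrow> Wt Ms G"
proof -
  assume "Wt Ms F" "\<And>H p eH eP w. F H p eH eP w = G H p eH eP w"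
  moreover have "F = G" using calculation(2) by (intro ext) auto
  ultimately show ?thesis by simp
qed

lemma Wt_const: "Wt Ms (\<lambda>H p eH eP w. c)"
  using W_c[OF g_const[of c]] by simp

lemma push_comp: "case_nat x (e \<circ> r) = (case_nat x e) \<circ> case_nat 0 (Suc \<circ> r)"
  by (rule ext) (simp split: nat.splits)

lemma push_Suc: "(case_nat x e) \<circ> Suc = e"
  by (rule ext) simp

lemma Wt_reindex: "Wt Ms F \<Longrightarrow> Wt Ms (\<lambda>H p eH eP w. F H p (eH \<circ> r1) (eP \<circ> r2) w)"
proof (induction arbitrary: r1 r2 rule: Wt.induct)
  case (W_c g)
  show ?case using Wt.W_c[OF good_reindex[OF W_c.hyps, of r1 r2]] by (simp add: comp_def)
next
  case (W_cm g F)
  show ?case using Wt.W_cm[OF good_reindex[OF W_cm.hyps(1), of r1 r2] W_cm.IH[of r1 r2]] by (simp add: comp_def)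
next
  case (W_a m F a b)
  show ?case using Wt.W_a[OF W_a.hyps(1) W_a.IH[of r1 r2], of "r1 a" "r2 b"] by (simp add: comp_def)
next
  case (W_p F G)
  show ?case using Wt.W_p[OF W_p.IH(1)[of r1 r2] W_p.IH(2)[of r1 r2]] by (simp add: comp_def)
next
  case (W_sH F)
  show ?case by (rule Wt_cong[OF Wt.W_sH[OF W_sH.IH[of "case_nat 0 (Suc \<circ> r1)" r2]]]) (simp only: push_comp[symmetric])
next
  case (W_sP F)
  show ?case by (rule Wt_cong[OF Wt.W_sP[OF W_sP.IH[of r1 "case_nat 0 (Suc \<circ> r2)"]]]) (simp only: push_comp[symmetric])
qed

lemma Wt_mult: "Wt Ms F \<Longrightarrow> Wt Ms G \<Longrightarrow> Wt Ms (\<lambda>H p eH eP w. F H p eH eP w * G H p eH eP w)"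
proof (induction arbitrary: G rule: Wt.induct)
  case (W_c g)
  then show ?case by (rule Wt.W_cm)
next
  case (W_cm g F)
  show ?case by (rule Wt_cong[OF Wt.W_cm[OF W_cm.hyps(1) W_cm.IH[OF W_cm.prems]]]) (simp only: mult.assoc)
next
  case (W_a m F a b)
  show ?case by (rule Wt_cong[OF Wt.W_a[OF W_a.hyps(1) W_a.IH[OF W_a.prems], of a b]]) (simp only: mult.assoc)
next
  case (W_p F1 F2)
  show ?case by (rule Wt_cong[OF Wt.W_p[OF W_p.IH(1)[OF W_p.prems] W_p.IH(2)[OF W_p.prems]]]) (simp only: distrib_right)
next
  case (W_sH F)
  have "Wt Ms (\<lambda>H p eH eP w. G H p (eH \<circ> Suc) (eP \<circ> id) w)" by (rule Wt_reindex[OF W_sH.prems])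
  then have G': "Wt Ms (\<lambda>H p eH eP w. G H p (eH \<circ> Suc) eP w)" by simp
  show ?case by (rule Wt_cong[OF Wt.W_sH[OF W_sH.IH[OF G']]]) (simp only: push_Suc sum_distrib_right)
next
  case (W_sP F)
  have "Wt Ms (\<lambda>H p eH eP w. G H p (eH \<circ> id) (eP \<circ> Suc) w)" by (rule Wt_reindex[OF W_sP.prems])
  then have G': "Wt Ms (\<lambda>H p eH eP w. G H p eH (eP \<circ> Suc) w)" by simp
  show ?case by (rule Wt_cong[OF Wt.W_sP[OF W_sP.IH[OF G']]]) (simp only: push_Suc sum_distrib_right)
qed

lemma Wt_sum: "finite A \<Longrightarrow> (\<forall>j\<in>A. Wt Ms (F j)) \<Longrightarrow> Wt Ms (\<lambda>H p eH eP w. \<Sum>j\<in>A. F j H p eH eP w)"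
proof (induction rule: finite_induct)
  case empty then show ?case by (simp add: Wt_const)
next
  case (insert x A)
  then show ?case using W_p[of Ms "F x"] by simp
qed

lemma Wt_prod: "finite A \<Longrightarrow> (\<forall>j\<in>A. Wt Ms (F j)) \<Longrightarrow> Wt Ms (\<lambda>H p eH eP w. \<Prod>j\<in>A. F j H p eH eP w)"
proof (induction rule: finite_induct)
  case empty then show ?case by (simp add: Wt_const)
next
  case (insert x A)
  then show ?case using Wt_mult[of Ms "F x"] by simp
qed

lemma Wt_scale: "Wt Ms F \<Longrightarrow> Wt Ms (\<lambda>H p eH eP w. c * F H p eH eP w)"
  using W_cm[OF g_const[of c]] by simp

lemma Wt_atom: "m \<in> Ms \<Longrightarrow> Wt Ms (\<lambda>H p eH eP w. w (eH a, eP b, m))"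
  using W_a[OF _ Wt_const[of Ms 1]] by simp


lemma partial_eq: "((\<lambda>x. f (w(j:=x))) has_real_derivative D) (at (w j)) \<Longrightarrow> partial f w j = D"
  unfolding partial_def by (rule DERIV_imp_deriv)

lemma deriv_upd: "((\<lambda>x. (w(j:=x)) t) has_real_derivative (if t = j then 1 else 0)) (at y)"
  by (cases "t = j") auto


lemma pdiff_intro: "((\<lambda>x. f (w(j:=x))) has_real_derivative D) (at (w j)) \<Longrightarrow>
   ((\<lambda>x. f (w(j:=x))) has_real_derivative partial f w j) (at (w j))"
proof -
  assume d: "((\<lambda>x. f (w(j:=x))) has_real_derivative D) (at (w j))"
  have "partial f w j = D" unfolding partial_def by (rule DERIV_imp_deriv[OF d])
  then show ?thesis using d by simp
qed

lemma pd_Wt: "Wt Ms F \<Longrightarrow> ((\<lambda>x. F H p eH eP (w(j:=x))) has_real_derivative partial (F H p eH eP) w j) (at (w j))"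
  apply (induction arbitrary: eH eP rule: Wt.induct)
  subgoal for g eH eP by (rule pdiff_intro[where f="\<lambda>w. g H p 0 eH eP"], rule DERIV_const)
  subgoal for g F eH eP by (rule pdiff_intro[where f="\<lambda>w. g H p 0 eH eP * F H p eH eP w"], rule DERIV_cmult, blast)
  subgoal for m F a b eH eP by (rule pdiff_intro[where f="\<lambda>w. w (eH a, eP b, m) * F H p eH eP w"], rule DERIV_mult, rule deriv_upd, blast)
  subgoal for F G eH eP by (rule pdiff_intro[where f="\<lambda>w. F H p eH eP w + G H p eH eP w"], rule DERIV_add, blast, blast)
  subgoal for F eH eP by (rule pdiff_intro[where f="\<lambda>w. \<Sum>x=1..H. F H p (case_nat x eH) eP w"], rule DERIV_sum, blast)
  subgoal for F eH eP by (rule pdiff_intro[where f="\<lambda>w. \<Sum>x=1..p. F H p eH (case_nat x eP) w"], rule DERIV_sum, blast)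
  done

lemma partial_cm: "Wt Ms F \<Longrightarrow> partial (\<lambda>w. c * F H p eH eP w) w j = c * partial (F H p eH eP) w j"
proof -
  assume F: "Wt Ms F"
  have d: "((\<lambda>x. c * F H p eH eP (w(j:=x))) has_real_derivative c * partial (F H p eH eP) w j) (at (w j))"
    by (rule DERIV_cmult[OF pd_Wt[OF F]])
  show ?thesis by (rule partial_eq[where f="\<lambda>w. c * F H p eH eP w", OF d])
qed

lemma partial_a: "Wt Ms F \<Longrightarrow> partial (\<lambda>w. w t * F H p eH eP w) w j =
    (if t = j then 1 else 0) * F H p eH eP w + w t * partial (F H p eH eP) w j"
proof -
  assume F: "Wt Ms F"
  have d: "((\<lambda>x. (w(j:=x)) t * F H p eH eP (w(j:=x))) has_real_derivative
     (if t = j then 1 else 0) * F H p eH eP (w(j:=w j)) + partial (F H p eH eP) w j * (w(j:=w j)) t) (at (w j))"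
    by (rule DERIV_mult[OF deriv_upd pd_Wt[OF F]])
  have "partial (\<lambda>w. w t * F H p eH eP w) w j = (if t = j then 1 else 0) * F H p eH eP (w(j:=w j)) + partial (F H p eH eP) w j * (w(j:=w j)) t"
    by (rule partial_eq[where f="\<lambda>w. w t * F H p eH eP w", OF d])
  then show ?thesis by simp
qed

lemma partial_p: "Wt Ms F \<Longrightarrow> Wt Ms G \<Longrightarrow> partial (\<lambda>w. F H p eH eP w + G H p eH eP w) w j =
   partial (F H p eH eP) w j + partial (G H p eH eP) w j"
proof -
  assume F: "Wt Ms F" and G: "Wt Ms G"
  have d: "((\<lambda>x. F H p eH eP (w(j:=x)) + G H p eH eP (w(j:=x))) has_real_derivative
     partial (F H p eH eP) w j + partial (G H p eH eP) w j) (at (w j))"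
    by (rule DERIV_add[OF pd_Wt[OF F] pd_Wt[OF G]])
  show ?thesis by (rule partial_eq[where f="\<lambda>w. F H p eH eP w + G H p eH eP w", OF d])
qed

lemma partial_s: "Wt Ms F \<Longrightarrow> partial (\<lambda>w. \<Sum>y\<in>A. F H p (e1 y) (e2 y) w) w j = (\<Sum>y\<in>A. partial (F H p (e1 y) (e2 y)) w j)"
proof -
  assume F: "Wt Ms F"
  have d: "((\<lambda>x. \<Sum>y\<in>A. F H p (e1 y) (e2 y) (w(j:=x))) has_real_derivative
     (\<Sum>y\<in>A. partial (F H p (e1 y) (e2 y)) w j)) (at (w j))"
    by (rule DERIV_sum, rule pd_Wt[OF F])
  show ?thesis by (rule partial_eq[where f="\<lambda>w. \<Sum>y\<in>A. F H p (e1 y) (e2 y) w", OF d])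
qed

lemma partial_c: "partial (\<lambda>w. c) w j = 0"
  by (rule partial_eq[where f="\<lambda>w. c"]) simp

lemma Wt_partial: "Wt Ms F \<Longrightarrow> Wt Ms (\<lambda>H p eH eP w. partial (F H p eH eP) w (eH a, eP b, m))"
  apply (induction arbitrary: a b m rule: Wt.induct)
  subgoal for g a b m
    by (rule Wt_cong[OF Wt_const[of Ms 0]]) (simp add: partial_c)
  subgoal for g F a b m
    by (rule Wt_cong[OF Wt.W_cm[of g Ms "\<lambda>H p eH eP w. partial (F H p eH eP) w (eH a, eP b, m)"]]) (simp_all add: partial_cm)
  subgoal premises prems for m0 F a0 b0 a b m
  proof -
    have gd: "good (\<lambda>H p s eH eP. (if eH a0 = eH a then 1 else 0) * ((if eP b0 = eP b then 1 else 0) * (if m0 = m then 1 else 0)))"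
      by (intro g_mult g_dH g_dP g_const)
    show ?thesis
      by (rule Wt_cong[OF Wt.W_p[OF Wt.W_cm[OF gd prems(2)] Wt.W_a[OF prems(1) prems(3)[of a b m], of a0 b0]]])
         (simp add: partial_a[OF prems(2)])
  qed
  subgoal for F G a b m
    by (rule Wt_cong[OF Wt.W_p[of Ms "\<lambda>H p eH eP w. partial (F H p eH eP) w (eH a, eP b, m)"
          "\<lambda>H p eH eP w. partial (G H p eH eP) w (eH a, eP b, m)"]]) (simp_all add: partial_p)
  subgoal premises prems for F a b m
    by (rule Wt_cong[OF Wt.W_sH[OF prems(2)[of "Suc a" b m]]])
       (simp add: partial_s[OF prems(1)])
  subgoal premises prems for F a b m
    by (rule Wt_cong[OF Wt.W_sP[OF prems(2)[of a "Suc b" m]]])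
       (simp add: partial_s[OF prems(1)])
  done



lemma chain_Wt:
  assumes "Wt Ms F" "finite Ms"
  shows "wfe H eH \<Longrightarrow> wfe p eP \<Longrightarrow> (\<forall>j\<in>{1..H}\<times>{1..p}\<times>Ms. ((\<lambda>\<tau>. \<psi> \<tau> j) has_real_derivative \<psi>' j) (at t)) \<Longrightarrow>
   ((\<lambda>\<tau>. F H p eH eP (\<psi> \<tau>)) has_real_derivative (\<Sum>j\<in>{1..H}\<times>{1..p}\<times>Ms. partial (F H p eH eP) (\<psi> t) j * \<psi>' j)) (at t)"
  using assms(1)
  apply (induction arbitrary: eH eP rule: Wt.induct)
  subgoal for g eH eP by (simp add: partial_c)
  subgoal premises prems for g F eH eP
  proof -
    have eq: "(\<Sum>j\<in>{1..H}\<times>{1..p}\<times>Ms. partial (\<lambda>w. g H p 0 eH eP * F H p eH eP w) (\<psi> t) j * \<psi>' j)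
       = g H p 0 eH eP * (\<Sum>j\<in>{1..H}\<times>{1..p}\<times>Ms. partial (F H p eH eP) (\<psi> t) j * \<psi>' j)"
      by (simp add: partial_cm[OF prems(2)] sum_distrib_left mult.assoc)
    show ?thesis unfolding eq by (rule DERIV_cmult[OF prems(3)[OF prems(4,5,6)]])
  qed
  subgoal premises prems for m F a b eH eP
  proof -
    let ?S = "{1..H}\<times>{1..p}\<times>Ms"
    let ?t0 = "(eH a, eP b, m)"
    have t0: "?t0 \<in> ?S" using prems by (auto simp: wfe_def)
    have eq: "(\<Sum>j\<in>?S. partial (\<lambda>w. w ?t0 * F H p eH eP w) (\<psi> t) j * \<psi>' j)
       = \<psi>' ?t0 * F H p eH eP (\<psi> t) + (\<Sum>j\<in>?S. partial (F H p eH eP) (\<psi> t) j * \<psi>' j) * \<psi> t ?t0"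
    proof -
      have "(\<Sum>j\<in>?S. partial (\<lambda>w. w ?t0 * F H p eH eP w) (\<psi> t) j * \<psi>' j)
         = (\<Sum>j\<in>?S. (if ?t0 = j then F H p eH eP (\<psi> t) * \<psi>' j else 0)) + (\<Sum>j\<in>?S. \<psi> t ?t0 * (partial (F H p eH eP) (\<psi> t) j * \<psi>' j))"
        by (subst sum.distrib[symmetric], rule sum.cong[OF refl], subst partial_a[OF prems(2)]) (simp add: algebra_simps)
      also have "\<dots> = F H p eH eP (\<psi> t) * \<psi>' ?t0 + \<psi> t ?t0 * (\<Sum>j\<in>?S. partial (F H p eH eP) (\<psi> t) j * \<psi>' j)"
        using t0 assms(2) by (simp add: sum_distrib_left)
      finally show ?thesis by (simp add: ac_simps)
    qed
    have d0: "((\<lambda>\<tau>. \<psi> \<tau> ?t0) has_real_derivative \<psi>' ?t0) (at t)" using prems(6) t0 by blast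
    show ?thesis unfolding eq by (rule DERIV_mult[OF d0 prems(3)[OF prems(4,5,6)]])
  qed
  subgoal premises prems for F G eH eP
  proof -
    have eq: "(\<Sum>j\<in>{1..H}\<times>{1..p}\<times>Ms. partial (\<lambda>w. F H p eH eP w + G H p eH eP w) (\<psi> t) j * \<psi>' j)
       = (\<Sum>j\<in>{1..H}\<times>{1..p}\<times>Ms. partial (F H p eH eP) (\<psi> t) j * \<psi>' j) + (\<Sum>j\<in>{1..H}\<times>{1..p}\<times>Ms. partial (G H p eH eP) (\<psi> t) j * \<psi>' j)"
      by (simp add: partial_p[OF prems(1,3)] distrib_right sum.distrib)
    show ?thesis unfolding eq by (rule DERIV_add[OF prems(2)[OF prems(5,6,7)] prems(4)[OF prems(5,6,7)]])
  qed
  subgoal premises prems for F eH eP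
  proof -
    have eq: "(\<Sum>j\<in>{1..H}\<times>{1..p}\<times>Ms. partial (\<lambda>w. \<Sum>x=1..H. F H p (case_nat x eH) eP w) (\<psi> t) j * \<psi>' j)
       = (\<Sum>x=1..H. \<Sum>j\<in>{1..H}\<times>{1..p}\<times>Ms. partial (F H p (case_nat x eH) eP) (\<psi> t) j * \<psi>' j)"
      by (simp add: partial_s[OF prems(1)] sum_distrib_right) (rule sum.swap)
    show ?thesis unfolding eq
      by (rule DERIV_sum, rule prems(2)) (use prems in \<open>auto intro: wfe_push\<close>)
  qed
  subgoal premises prems for F eH eP
  proof -
    have eq: "(\<Sum>j\<in>{1..H}\<times>{1..p}\<times>Ms. partial (\<lambda>w. \<Sum>x=1..p. F H p eH (case_nat x eP) w) (\<psi> t) j * \<psi>' j)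
       = (\<Sum>x=1..p. \<Sum>j\<in>{1..H}\<times>{1..p}\<times>Ms. partial (F H p eH (case_nat x eP)) (\<psi> t) j * \<psi>' j)"
      by (simp add: partial_s[OF prems(1)] sum_distrib_right) (rule sum.swap)
    show ?thesis unfolding eq
      by (rule DERIV_sum, rule prems(2)) (use prems in \<open>auto intro: wfe_push\<close>)
  qed
  done



definition Nm :: "real \<Rightarrow> real measure" where
  "Nm s = density lborel (normal_density 0 s)"

definition mom :: "real \<Rightarrow> nat \<Rightarrow> real" where
  "mom s n = (\<integral>x. x ^ n \<partial>Nm s)"

lemma integrable_Nm_pow: "0 < s \<Longrightarrow> integrable (Nm s) (\<lambda>x. x ^ n)"
  unfolding Nm_def
  by (subst integrable_density) (use integrable_normal_moment[of s 0 n] in auto)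

lemma mom_eq: "0 < s \<Longrightarrow> mom s n = (\<integral>x. normal_density 0 s x * x ^ n \<partial>lborel)"
  unfolding mom_def Nm_def by (subst integral_density) auto

lemma mom_even: "0 < s \<Longrightarrow> mom s (2*k) = fact (2 * k) / ((2 / s\<^sup>2)^k * fact k)"
  using integral_normal_moment_even[of s 0 k] by (simp add: mom_eq)

lemma mom_odd: "0 < s \<Longrightarrow> mom s (2*k+1) = 0"
  using integral_normal_moment_odd[of s 0 k] by (simp add: mom_eq)

lemma mom_0: "0 < s \<Longrightarrow> mom s 0 = 1"
  using mom_even[of s 0] by simp

lemma mom_1: "0 < s \<Longrightarrow> mom s 1 = 0"
  using mom_odd[of s 0] by simp

lemma mom_rec: "0 < s \<Longrightarrow> mom s (n+2) = real (n+1) * s^2 * mom s n"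
proof (cases "even n")
  case True
  assume s: "0 < s"
  then obtain k where k: "n = 2*k" using True by blast
  have "mom s (n+2) = fact (2*(k+1)) / ((2 / s\<^sup>2)^(k+1) * fact (k+1))"
    using mom_even[OF s, of "k+1"] k by (simp add: algebra_simps)
  also have "\<dots> = real (2*k+1) * s^2 * (fact (2 * k) / ((2 / s\<^sup>2)^k * fact k))"
  proof -
    have e: "2*(k+1) = Suc (Suc (2*k))" by simp
    have num: "(fact (2*(k+1))::real) = fact (2*k) * ((2*real k+2)*(2*real k+1))"
      unfolding e by (simp only: fact_Suc) (simp add: algebra_simps)
    have den: "(2/s\<^sup>2)^(k+1) * (fact (k+1)::real) = ((2/s\<^sup>2)^k * fact k) * ((2/s\<^sup>2) * (real k + 1))"
      by (simp add: algebra_simps)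
    have r: "((2*real k+2)*(2*real k+1)) / ((2/s\<^sup>2) * (real k+1)) = real (2*k+1) * s\<^sup>2"
      using s by (simp add: field_simps)
    have "fact (2*(k+1)) / ((2/s\<^sup>2)^(k+1) * fact (k+1)) = (fact (2 * k) / ((2 / s\<^sup>2)^k * fact k)) * (((2*real k+2)*(2*real k+1)) / ((2/s\<^sup>2) * (real k+1)))"
      unfolding num den times_divide_times_eq ..
    then show ?thesis unfolding r by simp
  qed
  finally show ?thesis using mom_even[OF s, of k] k by simp
next
  case False
  assume s: "0 < s"
  then obtain k where k: "n = 2*k+1" using False by (metis oddE)
  have "n + 2 = 2*(k+1)+1" using k by simp
  then show ?thesis using mom_odd[OF s, of "k+1"] mom_odd[OF s, of k] k by simp
qed

lemma psf_Nm: "0 < s \<Longrightarrow> product_sigma_finite (\<lambda>_. Nm s)"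
  unfolding product_sigma_finite_def Nm_def
  using prob_space_normal_density[of s 0] by (auto intro: prob_space_imp_sigma_finite)

lemma prod_list_count:
  assumes "finite I" "set js \<subseteq> I"
  shows "prod_list (map f js) = (\<Prod>j\<in>I. (f j :: real) ^ count (mset js) j)"
  using assms(2)
proof (induction js)
  case Nil then show ?case by simp
next
  case (Cons a js)
  have aI: "a \<in> I" using Cons.prems by simp
  have "(\<Prod>j\<in>I. f j ^ count (mset (a # js)) j) = (\<Prod>j\<in>I. f j ^ count (mset js) j * (if j = a then f j else 1))"
    by (intro prod.cong refl) auto
  also have "\<dots> = (\<Prod>j\<in>I. f j ^ count (mset js) j) * f a"
    using aI assms(1) by (simp add: prod.distrib)
  finally show ?case using Cons by simp
qed

definition Mu :: "scenario \<Rightarrow> nat \<Rightarrow> nat \<Rightarrow> nat \<Rightarrow> real \<Rightarrow> (nat \<times> nat \<times> nat \<Rightarrow> real) measure" where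
  "Mu sc H p \<nu> s = PiM (params sc H p \<nu>) (\<lambda>_. Nm s)"

lemma init_measure_Mu: "init_measure sc H p \<nu> s = Mu sc H p \<nu> s"
  unfolding init_measure_def Mu_def Nm_def ..

lemma finite_params: "finite (params sc H p \<nu>)"
  unfolding params_def by (cases sc) auto

lemma MomL:
  assumes s: "0 < s" and js: "set js \<subseteq> params sc H p \<nu>"
  shows "integrable (Mu sc H p \<nu> s) (\<lambda>w. prod_list (map w js))"
    and "(\<integral>w. prod_list (map w js) \<partial>Mu sc H p \<nu> s) = (\<Prod>j\<in>params sc H p \<nu>. mom s (count (mset js) j))"
proof -
  interpret product_sigma_finite "\<lambda>_. Nm s" by (rule psf_Nm[OF s])
  let ?I = "params sc H p \<nu>"
  have eq: "(\<lambda>w::_\<Rightarrow>real. prod_list (map w js)) = (\<lambda>w. \<Prod>j\<in>?I. (\<lambda>j x. x ^ count (mset js) j) j (w j))"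
    by (intro ext) (simp only: prod_list_count[OF finite_params js])
  show "integrable (Mu sc H p \<nu> s) (\<lambda>w. prod_list (map w js))"
    unfolding eq Mu_def
    by (rule product_integrable_prod) (auto simp: finite_params integrable_Nm_pow[OF s])
  show "(\<integral>w. prod_list (map w js) \<partial>Mu sc H p \<nu> s) = (\<Prod>j\<in>?I. mom s (count (mset js) j))"
    unfolding eq Mu_def
    by (subst product_integral_prod) (auto simp: finite_params integrable_Nm_pow[OF s] mom_def)
qed

definition del :: "nat \<Rightarrow> 'a list \<Rightarrow> 'a list" where
  "del r xs = take r xs @ drop (Suc r) xs"

lemma mset_del: "r < length xs \<Longrightarrow> mset (del r xs) = mset xs - {#xs ! r#}"
proof -
  assume r: "r < length xs"
  have "mset xs = mset (take r xs @ xs ! r # drop (Suc r) xs)"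
    using id_take_nth_drop[OF r] by simp
  then show ?thesis unfolding del_def by simp
qed

lemma del_map: "del r (map f xs) = map f (del r xs)"
  unfolding del_def by (simp add: take_map drop_map)

lemma length_del: "r < length xs \<Longrightarrow> length (del r xs) < Suc (length xs)"
  unfolding del_def by simp

lemma set_del: "set (del r xs) \<subseteq> set xs"
  unfolding del_def by (auto dest: in_set_takeD in_set_dropD)

lemma sum_if_count: "(\<Sum>r<length js. if j1 = js ! r then (K::real) else 0) = real (count (mset js) j1) * K"
proof -
  have "(\<Sum>r<length js. if j1 = js ! r then K else 0) = (\<Sum>r\<in>{r. r < length js \<and> j1 = js ! r}. K)"
    by (subst sum.inter_filter[symmetric]) (auto intro: sum.cong)
  also have "\<dots> = real (card {r. r < length js \<and> j1 = js ! r}) * K" by simp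
  also have "card {r. r < length js \<and> j1 = js ! r} = length (filter (\<lambda>y. j1 = y) js)"
    by (simp add: length_filter_conv_card)
  also have "\<dots> = count (mset js) j1" by (simp add: count_mset count_list_eq_length_filter)
  finally show ?thesis .
qed

lemma wick_alg:
  assumes s: "0 < s" and fin: "finite I" and j1: "j1 \<in> I"
  shows "(\<Prod>j\<in>I. mom s (count (mset (j1 # js)) j)) =
     s^2 * (\<Sum>r<length js. if j1 = js ! r then (\<Prod>j\<in>I. mom s (count (mset (del r js)) j)) else 0)"
proof -
  let ?C = "\<lambda>j. count (mset js) j"
  let ?c = "?C j1"
  let ?R = "(\<Prod>j\<in>I - {j1}. mom s (?C j))"
  have L: "(\<Prod>j\<in>I. mom s (count (mset (j1 # js)) j)) = mom s (?c + 1) * ?R"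
  proof -
    have "(\<Prod>j\<in>I. mom s (count (mset (j1 # js)) j)) = mom s (count (mset (j1 # js)) j1) * (\<Prod>j\<in>I - {j1}. mom s (count (mset (j1 # js)) j))"
      by (rule prod.remove[OF fin j1])
    also have "(\<Prod>j\<in>I - {j1}. mom s (count (mset (j1 # js)) j)) = ?R"
      by (rule prod.cong) auto
    finally show ?thesis by simp
  qed
  have D: "(\<Prod>j\<in>I. mom s (count (mset (del r js)) j)) = mom s (?c - 1) * ?R"
    if "r < length js" "j1 = js ! r" for r
  proof -
    have "count (mset (del r js)) j = ?C j - (if j = j1 then 1 else 0)" for j
      using that by (simp add: mset_del)
    then have cc: "count (mset (del r js)) j = (if j = j1 then ?c - 1 else ?C j)" for j by simp
    have "(\<Prod>j\<in>I. mom s (count (mset (del r js)) j)) = mom s (count (mset (del r js)) j1) * (\<Prod>j\<in>I - {j1}. mom s (count (mset (del r js)) j))"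
      by (rule prod.remove[OF fin j1])
    also have "(\<Prod>j\<in>I - {j1}. mom s (count (mset (del r js)) j)) = ?R"
      by (rule prod.cong) (auto simp: cc)
    finally show ?thesis by (simp add: cc)
  qed
  have "(\<Sum>r<length js. if j1 = js ! r then (\<Prod>j\<in>I. mom s (count (mset (del r js)) j)) else 0)
      = (\<Sum>r<length js. if j1 = js ! r then mom s (?c - 1) * ?R else 0)"
    by (intro sum.cong refl) (auto simp: D)
  also have "\<dots> = real ?c * (mom s (?c - 1) * ?R)" by (rule sum_if_count)
  finally have S: "(\<Sum>r<length js. if j1 = js ! r then (\<Prod>j\<in>I. mom s (count (mset (del r js)) j)) else 0)
      = real ?c * (mom s (?c - 1) * ?R)" .
  show ?thesis
  proof (cases "?c")
    case 0
    have c0: "count (mset js) j1 = 0" using 0 by simp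
    show ?thesis unfolding L S c0 using mom_1[OF s] by simp
  next
    case (Suc c')
    have M: "mom s (?c + 1) = real ?c * s^2 * mom s (?c - 1)"
      using mom_rec[OF s, of c'] Suc by simp
    show ?thesis unfolding L S M by (simp add: ac_simps)
  qed
qed



definition Msc :: "scenario \<Rightarrow> nat \<Rightarrow> nat set" where
  "Msc sc \<nu> = (case sc of ASYM \<Rightarrow> {1..\<nu>} | SYM \<Rightarrow> {1})"

lemma params_Msc: "params sc H p \<nu> = {1..H} \<times> {1..p} \<times> Msc sc \<nu>"
  unfolding params_def Msc_def ..

lemma finite_Msc: "finite (Msc sc \<nu>)"
  unfolding Msc_def by (cases sc) auto

definition inst :: "(nat \<Rightarrow> nat) \<Rightarrow> (nat \<Rightarrow> nat) \<Rightarrow> nat \<times> nat \<times> nat \<Rightarrow> nat \<times> nat \<times> nat" where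
  "inst eH eP t = (eH (fst t), eP (fst (snd t)), snd (snd t))"

lemma inst_in: "wfe H eH \<Longrightarrow> wfe p eP \<Longrightarrow> snd (snd t) \<in> Msc sc \<nu> \<Longrightarrow> inst eH eP t \<in> params sc H p \<nu>"
  unfolding params_Msc inst_def wfe_def by auto

definition MomS :: "scenario \<Rightarrow> nat \<Rightarrow> (nat \<times> nat \<times> nat) list \<Rightarrow> gfun" where
  "MomS sc \<nu> ts = (\<lambda>H p s eH eP. \<integral>w. prod_list (map (\<lambda>t. w (inst eH eP t)) ts) \<partial>Mu sc H p \<nu> s)"

lemma map_inst: "map (\<lambda>t. w (inst eH eP t)) ts = map w (map (inst eH eP) ts)"
  by simp

lemma MomS_eq:
  assumes "0 < s" "wfe H eH" "wfe p eP" "\<forall>t\<in>set ts. snd (snd t) \<in> Msc sc \<nu>"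
  shows "MomS sc \<nu> ts H p s eH eP = (\<Prod>j\<in>params sc H p \<nu>. mom s (count (mset (map (inst eH eP) ts)) j))"
    and "integrable (Mu sc H p \<nu> s) (\<lambda>w. prod_list (map (\<lambda>t. w (inst eH eP t)) ts))"
proof -
  have js: "set (map (inst eH eP) ts) \<subseteq> params sc H p \<nu>" using assms inst_in by auto
  show "MomS sc \<nu> ts H p s eH eP = (\<Prod>j\<in>params sc H p \<nu>. mom s (count (mset (map (inst eH eP) ts)) j))"
    unfolding MomS_def map_inst by (rule MomL(2)[OF assms(1) js])
  show "integrable (Mu sc H p \<nu> s) (\<lambda>w. prod_list (map (\<lambda>t. w (inst eH eP t)) ts))"
    unfolding map_inst by (rule MomL(1)[OF assms(1) js])
qed

definition dl :: "nat \<times> nat \<times> nat \<Rightarrow> nat \<times> nat \<times> nat \<Rightarrow> gfun" where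
  "dl t1 t2 = (\<lambda>H p s eH eP. (if eH (fst t1) = eH (fst t2) then 1 else 0) *
       ((if eP (fst (snd t1)) = eP (fst (snd t2)) then 1 else 0) * (if snd (snd t1) = snd (snd t2) then 1 else 0)))"

lemma good_dl: "good (dl t1 t2)"
  unfolding dl_def by (intro g_mult g_dH g_dP g_const)

lemma dl_eq: "dl t1 t2 H p s eH eP = (if inst eH eP t1 = inst eH eP t2 then 1 else 0)"
  unfolding dl_def inst_def by auto

lemma goodish_MomS: "\<forall>t\<in>set ts. snd (snd t) \<in> Msc sc \<nu> \<Longrightarrow> goodish (MomS sc \<nu> ts)"
proof (induction ts rule: length_induct)
  case (1 xs)
  show ?case
  proof (cases xs)
    case Nil
    show ?thesis
    proof (rule goodish_cong[OF good_goodish[OF g_const[of 1]]])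
      fix H p s eH eP assume a: "1 \<le> H" "1 \<le> (p::nat)" "0 < (s::real)" "wfe H eH" "wfe p eP"
      show "1 = MomS sc \<nu> xs H p s eH eP"
        using MomS_eq(1)[OF a(3,4,5), of xs sc \<nu>] Nil by (simp add: mom_0[OF a(3)])
    qed
  next
    case (Cons t1 rest)
    let ?G = "\<lambda>H p s eH eP. s^2 * (\<Sum>r<length rest. dl t1 (rest ! r) H p s eH eP * MomS sc \<nu> (del r rest) H p s eH eP)"
    have IH: "goodish (MomS sc \<nu> (del r rest))" if "r < length rest" for r
    proof -
      have "length (del r rest) < length xs" using that Cons by (simp add: del_def)
      moreover have "\<forall>t\<in>set (del r rest). snd (snd t) \<in> Msc sc \<nu>" using "1.prems" Cons set_del by fastforce
      ultimately show ?thesis using "1.IH" by blast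
    qed
    have gG: "goodish ?G"
      by (intro goodish_mult good_goodish g_s goodish_sum) (auto intro: goodish_mult good_goodish good_dl IH)
    show ?thesis
    proof (rule goodish_cong[OF gG])
      fix H p s eH eP assume a: "1 \<le> H" "1 \<le> (p::nat)" "0 < (s::real)" "wfe H eH" "wfe p eP"
      let ?js = "map (inst eH eP) rest"
      have j1: "inst eH eP t1 \<in> params sc H p \<nu>" using "1.prems" Cons a inst_in by auto
      have "MomS sc \<nu> xs H p s eH eP = (\<Prod>j\<in>params sc H p \<nu>. mom s (count (mset (inst eH eP t1 # ?js)) j))"
        using MomS_eq(1)[OF a(3,4,5) "1.prems"] Cons by simp
      also have "\<dots> = s^2 * (\<Sum>r<length ?js. if inst eH eP t1 = ?js ! r then (\<Prod>j\<in>params sc H p \<nu>. mom s (count (mset (del r ?js)) j)) else 0)"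
        by (rule wick_alg[OF a(3) finite_params j1])
      also have "\<dots> = ?G H p s eH eP"
      proof -
        have "(if inst eH eP t1 = ?js ! r then (\<Prod>j\<in>params sc H p \<nu>. mom s (count (mset (del r ?js)) j)) else 0)
           = dl t1 (rest ! r) H p s eH eP * MomS sc \<nu> (del r rest) H p s eH eP" if r: "r < length rest" for r
        proof -
          have "\<forall>t\<in>set (del r rest). snd (snd t) \<in> Msc sc \<nu>" using "1.prems" Cons set_del by fastforce
          then have "MomS sc \<nu> (del r rest) H p s eH eP = (\<Prod>j\<in>params sc H p \<nu>. mom s (count (mset (del r ?js)) j))"
            using MomS_eq(1)[OF a(3,4,5)] by (simp add: del_map)
          then show ?thesis using r by (simp add: dl_eq)
        qed
        then show ?thesis by simp
      qed
      finally show "?G H p s eH eP = MomS sc \<nu> xs H p s eH eP" by simp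
    qed
  qed
qed



definition EW :: "scenario \<Rightarrow> nat \<Rightarrow> wfun \<Rightarrow> (nat \<times> nat \<times> nat) list \<Rightarrow> gfun" where
  "EW sc \<nu> F ts = (\<lambda>H p s eH eP. \<integral>w. F H p eH eP w * prod_list (map (\<lambda>t. w (inst eH eP t)) ts) \<partial>Mu sc H p \<nu> s)"

definition IW :: "scenario \<Rightarrow> nat \<Rightarrow> wfun \<Rightarrow> (nat \<times> nat \<times> nat) list \<Rightarrow> bool" where
  "IW sc \<nu> F ts = (\<forall>H p s eH eP. 1 \<le> H \<longrightarrow> 1 \<le> p \<longrightarrow> 0 < s \<longrightarrow> wfe H eH \<longrightarrow> wfe p eP \<longrightarrow>
      integrable (Mu sc H p \<nu> s) (\<lambda>w. F H p eH eP w * prod_list (map (\<lambda>t. w (inst eH eP t)) ts)))"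

definition shH :: "nat \<times> nat \<times> nat \<Rightarrow> nat \<times> nat \<times> nat" where
  "shH t = (Suc (fst t), snd t)"

definition shP :: "nat \<times> nat \<times> nat \<Rightarrow> nat \<times> nat \<times> nat" where
  "shP t = (fst t, Suc (fst (snd t)), snd (snd t))"

lemma inst_shH: "inst (case_nat x eH) eP (shH t) = inst eH eP t"
  unfolding inst_def shH_def by simp

lemma inst_shP: "inst eH (case_nat x eP) (shP t) = inst eH eP t"
  unfolding inst_def shP_def by simp

lemma map_shH: "map (\<lambda>t. w (inst (case_nat x eH) eP t)) (map shH ts) = map (\<lambda>t. w (inst eH eP t)) ts"
  by (simp add: inst_shH)

lemma map_shP: "map (\<lambda>t. w (inst eH (case_nat x eP) t)) (map shP ts) = map (\<lambda>t. w (inst eH eP t)) ts"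
  by (simp add: inst_shP)

lemma expect_Wt: "Wt (Msc sc \<nu>) F \<Longrightarrow> \<forall>t\<in>set ts. snd (snd t) \<in> Msc sc \<nu> \<Longrightarrow> goodish (EW sc \<nu> F ts) \<and> IW sc \<nu> F ts"
proof (induction arbitrary: ts rule: Wt.induct)
  case (W_c g)
  have I: "IW sc \<nu> (\<lambda>H p eH eP w. g H p 0 eH eP) ts"
    unfolding IW_def using MomS_eq(2)[OF _ _ _ W_c.prems] by auto
  have G: "goodish (EW sc \<nu> (\<lambda>H p eH eP w. g H p 0 eH eP) ts)"
  proof (rule goodish_cong[OF goodish_mult[OF good_goodish[OF good_s0[OF W_c.hyps]] goodish_MomS[OF W_c.prems]]])
    fix H p s eH eP assume a: "1 \<le> H" "1 \<le> (p::nat)" "0 < (s::real)" "wfe H eH" "wfe p eP"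
    show "g H p 0 eH eP * MomS sc \<nu> ts H p s eH eP = EW sc \<nu> (\<lambda>H p eH eP w. g H p 0 eH eP) ts H p s eH eP"
      unfolding EW_def MomS_def using MomS_eq(2)[OF a(3,4,5) W_c.prems] by simp
  qed
  show ?case using I G by simp
next
  case (W_cm g F)
  from W_cm.IH[OF W_cm.prems] have IH: "goodish (EW sc \<nu> F ts)" "IW sc \<nu> F ts" by auto
  have I: "IW sc \<nu> (\<lambda>H p eH eP w. g H p 0 eH eP * F H p eH eP w) ts"
    using IH(2) unfolding IW_def by (auto simp: mult.assoc)
  have G: "goodish (EW sc \<nu> (\<lambda>H p eH eP w. g H p 0 eH eP * F H p eH eP w) ts)"
  proof (rule goodish_cong[OF goodish_mult[OF good_goodish[OF good_s0[OF W_cm.hyps(1)]] IH(1)]])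
    fix H p s eH eP assume a: "1 \<le> H" "1 \<le> (p::nat)" "0 < (s::real)" "wfe H eH" "wfe p eP"
    show "g H p 0 eH eP * EW sc \<nu> F ts H p s eH eP = EW sc \<nu> (\<lambda>H p eH eP w. g H p 0 eH eP * F H p eH eP w) ts H p s eH eP"
      unfolding EW_def using IH(2) a unfolding IW_def by (simp add: mult.assoc)
  qed
  show ?case using I G by simp
next
  case (W_a m F a b)
  have pr: "\<forall>t\<in>set ((a, b, m) # ts). snd (snd t) \<in> Msc sc \<nu>" using W_a.prems W_a.hyps(1) by simp
  from W_a.IH[OF pr] have IH: "goodish (EW sc \<nu> F ((a, b, m) # ts))" "IW sc \<nu> F ((a, b, m) # ts)" by auto
  have eq: "F H p eH eP w * prod_list (map (\<lambda>t. w (inst eH eP t)) ((a, b, m) # ts)) =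
     w (eH a, eP b, m) * F H p eH eP w * prod_list (map (\<lambda>t. w (inst eH eP t)) ts)" for H p eH eP w
    by (simp add: inst_def)
  have I: "IW sc \<nu> (\<lambda>H p eH eP w. w (eH a, eP b, m) * F H p eH eP w) ts"
    using IH(2) unfolding IW_def eq by simp
  have G: "goodish (EW sc \<nu> (\<lambda>H p eH eP w. w (eH a, eP b, m) * F H p eH eP w) ts)"
    using IH(1) unfolding EW_def eq by simp
  show ?case using I G by simp
next
  case (W_p F G)
  from W_p.IH(1)[OF W_p.prems] have IH1: "goodish (EW sc \<nu> F ts)" "IW sc \<nu> F ts" by auto
  from W_p.IH(2)[OF W_p.prems] have IH2: "goodish (EW sc \<nu> G ts)" "IW sc \<nu> G ts" by auto
  have I: "IW sc \<nu> (\<lambda>H p eH eP w. F H p eH eP w + G H p eH eP w) ts"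
    using IH1(2) IH2(2) unfolding IW_def by (auto simp: distrib_right)
  have GG: "goodish (EW sc \<nu> (\<lambda>H p eH eP w. F H p eH eP w + G H p eH eP w) ts)"
  proof (rule goodish_cong[OF goodish_add[OF IH1(1) IH2(1)]])
    fix H p s eH eP assume a: "1 \<le> H" "1 \<le> (p::nat)" "0 < (s::real)" "wfe H eH" "wfe p eP"
    show "EW sc \<nu> F ts H p s eH eP + EW sc \<nu> G ts H p s eH eP = EW sc \<nu> (\<lambda>H p eH eP w. F H p eH eP w + G H p eH eP w) ts H p s eH eP"
      unfolding EW_def using IH1(2) IH2(2) a unfolding IW_def by (simp add: distrib_right)
  qed
  show ?case using I GG by simp
next
  case (W_sH F)
  have pr: "\<forall>t\<in>set (map shH ts). snd (snd t) \<in> Msc sc \<nu>" using W_sH.prems by (auto simp: shH_def)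
  from W_sH.IH[OF pr] have IH: "goodish (EW sc \<nu> F (map shH ts))" "IW sc \<nu> F (map shH ts)" by auto
  have I: "IW sc \<nu> (\<lambda>H p eH eP w. \<Sum>x=1..H. F H p (case_nat x eH) eP w) ts"
    unfolding IW_def
  proof (intro allI impI)
    fix H p s eH eP assume a: "1 \<le> H" "1 \<le> (p::nat)" "0 < (s::real)" "wfe H eH" "wfe p eP"
    have "integrable (Mu sc H p \<nu> s) (\<lambda>w. \<Sum>x\<in>{1..H}. F H p (case_nat x eH) eP w * prod_list (map (\<lambda>t. w (inst eH eP t)) ts))"
    proof (rule Bochner_Integration.integrable_sum)
      fix x assume x: "x \<in> {1..H}"
      have "integrable (Mu sc H p \<nu> s) (\<lambda>w. F H p (case_nat x eH) eP w * prod_list (map (\<lambda>t. w (inst (case_nat x eH) eP t)) (map shH ts)))"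
        by (rule IH(2)[unfolded IW_def, rule_format, OF a(1,2,3) wfe_push[OF a(4) x] a(5)])
      then show "integrable (Mu sc H p \<nu> s) (\<lambda>w. F H p (case_nat x eH) eP w * prod_list (map (\<lambda>t. w (inst eH eP t)) ts))"
        by (simp only: map_shH)
    qed
    then show "integrable (Mu sc H p \<nu> s) (\<lambda>w. (\<Sum>x=1..H. F H p (case_nat x eH) eP w) * prod_list (map (\<lambda>t. w (inst eH eP t)) ts))"
      by (simp add: sum_distrib_right)
  qed
  have GG: "goodish (EW sc \<nu> (\<lambda>H p eH eP w. \<Sum>x=1..H. F H p (case_nat x eH) eP w) ts)"
  proof (rule goodish_cong[OF goodish_sumH[OF IH(1)]])
    fix H p s eH eP assume a: "1 \<le> H" "1 \<le> (p::nat)" "0 < (s::real)" "wfe H eH" "wfe p eP"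
    have int: "integrable (Mu sc H p \<nu> s) (\<lambda>w. F H p (case_nat x eH) eP w * prod_list (map (\<lambda>t. w (inst eH eP t)) ts))"
      if "x \<in> {1..H}" for x
      using IH(2)[unfolded IW_def, rule_format, OF a(1,2,3) wfe_push[OF a(4) that] a(5)] by (simp only: map_shH)
    have "(\<Sum>x=1..H. EW sc \<nu> F (map shH ts) H p s (case_nat x eH) eP)
        = (\<Sum>x=1..H. \<integral>w. F H p (case_nat x eH) eP w * prod_list (map (\<lambda>t. w (inst eH eP t)) ts) \<partial>Mu sc H p \<nu> s)"
      unfolding EW_def map_shH ..
    also have "\<dots> = (\<integral>w. (\<Sum>x=1..H. F H p (case_nat x eH) eP w * prod_list (map (\<lambda>t. w (inst eH eP t)) ts)) \<partial>Mu sc H p \<nu> s)"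
      by (rule Bochner_Integration.integral_sum[symmetric]) (rule int)
    also have "\<dots> = EW sc \<nu> (\<lambda>H p eH eP w. \<Sum>x=1..H. F H p (case_nat x eH) eP w) ts H p s eH eP"
      unfolding EW_def by (simp add: sum_distrib_right)
    finally show "(\<Sum>x=1..H. EW sc \<nu> F (map shH ts) H p s (case_nat x eH) eP) = EW sc \<nu> (\<lambda>H p eH eP w. \<Sum>x=1..H. F H p (case_nat x eH) eP w) ts H p s eH eP" .
  qed
  show ?case using I GG by simp
next
  case (W_sP F)
  have pr: "\<forall>t\<in>set (map shP ts). snd (snd t) \<in> Msc sc \<nu>" using W_sP.prems by (auto simp: shP_def)
  from W_sP.IH[OF pr] have IH: "goodish (EW sc \<nu> F (map shP ts))" "IW sc \<nu> F (map shP ts)" by auto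
  have I: "IW sc \<nu> (\<lambda>H p eH eP w. \<Sum>x=1..p. F H p eH (case_nat x eP) w) ts"
    unfolding IW_def
  proof (intro allI impI)
    fix H p s eH eP assume a: "1 \<le> (H::nat)" "1 \<le> (p::nat)" "0 < (s::real)" "wfe H eH" "wfe p eP"
    have "integrable (Mu sc H p \<nu> s) (\<lambda>w. \<Sum>x\<in>{1..p}. F H p eH (case_nat x eP) w * prod_list (map (\<lambda>t. w (inst eH eP t)) ts))"
    proof (rule Bochner_Integration.integrable_sum)
      fix x assume x: "x \<in> {1..p}"
      have "integrable (Mu sc H p \<nu> s) (\<lambda>w. F H p eH (case_nat x eP) w * prod_list (map (\<lambda>t. w (inst eH (case_nat x eP) t)) (map shP ts)))"
        by (rule IH(2)[unfolded IW_def, rule_format, OF a(1,2,3,4) wfe_push[OF a(5) x]])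
      then show "integrable (Mu sc H p \<nu> s) (\<lambda>w. F H p eH (case_nat x eP) w * prod_list (map (\<lambda>t. w (inst eH eP t)) ts))"
        by (simp only: map_shP)
    qed
    then show "integrable (Mu sc H p \<nu> s) (\<lambda>w. (\<Sum>x=1..p. F H p eH (case_nat x eP) w) * prod_list (map (\<lambda>t. w (inst eH eP t)) ts))"
      by (simp add: sum_distrib_right)
  qed
  have GG: "goodish (EW sc \<nu> (\<lambda>H p eH eP w. \<Sum>x=1..p. F H p eH (case_nat x eP) w) ts)"
  proof (rule goodish_cong[OF goodish_sumP[OF IH(1)]])
    fix H p s eH eP assume a: "1 \<le> (H::nat)" "1 \<le> (p::nat)" "0 < (s::real)" "wfe H eH" "wfe p eP"
    have int: "integrable (Mu sc H p \<nu> s) (\<lambda>w. F H p eH (case_nat x eP) w * prod_list (map (\<lambda>t. w (inst eH eP t)) ts))"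
      if "x \<in> {1..p}" for x
      using IH(2)[unfolded IW_def, rule_format, OF a(1,2,3,4) wfe_push[OF a(5) that]] by (simp only: map_shP)
    have "(\<Sum>x=1..p. EW sc \<nu> F (map shP ts) H p s eH (case_nat x eP))
        = (\<Sum>x=1..p. \<integral>w. F H p eH (case_nat x eP) w * prod_list (map (\<lambda>t. w (inst eH eP t)) ts) \<partial>Mu sc H p \<nu> s)"
      unfolding EW_def map_shP ..
    also have "\<dots> = (\<integral>w. (\<Sum>x=1..p. F H p eH (case_nat x eP) w * prod_list (map (\<lambda>t. w (inst eH eP t)) ts)) \<partial>Mu sc H p \<nu> s)"
      by (rule Bochner_Integration.integral_sum[symmetric]) (rule int)
    also have "\<dots> = EW sc \<nu> (\<lambda>H p eH eP w. \<Sum>x=1..p. F H p eH (case_nat x eP) w) ts H p s eH eP"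
      unfolding EW_def by (simp add: sum_distrib_right)
    finally show "(\<Sum>x=1..p. EW sc \<nu> F (map shP ts) H p s eH (case_nat x eP)) = EW sc \<nu> (\<lambda>H p eH eP w. \<Sum>x=1..p. F H p eH (case_nat x eP) w) ts H p s eH eP" .
  qed
  show ?case using I GG by simp
qed



fun SP :: "nat \<Rightarrow> nat \<Rightarrow> ((nat \<Rightarrow> nat) \<Rightarrow> real) \<Rightarrow> (nat \<Rightarrow> nat) \<Rightarrow> real" where
  "SP p 0 G e = G e"
| "SP p (Suc n) G e = (\<Sum>x=1..p. SP p n G (case_nat x e))"

lemma sum_PiE_insert:
  assumes "x \<notin> S" "finite (T x)" "finite (PiE S T)"
  shows "(\<Sum>f\<in>PiE (insert x S) T. h f) = (\<Sum>y\<in>T x. \<Sum>g\<in>PiE S T. h (g(x := y)))"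
proof -
  have "(\<Sum>f\<in>PiE (insert x S) T. h f) = (\<Sum>f\<in>(\<lambda>(y, g). g(x := y)) ` (T x \<times> PiE S T). h f)"
    by (simp add: PiE_insert_eq)
  also have "\<dots> = (\<Sum>yg\<in>T x \<times> PiE S T. h ((\<lambda>(y, g). g(x := y)) yg))"
    by (rule sum.reindex[OF inj_combinator[OF assms(1)], unfolded comp_def])
  also have "\<dots> = (\<Sum>y\<in>T x. \<Sum>g\<in>PiE S T. h (g(x := y)))"
    by (simp only: sum.cartesian_product) (rule sum.cong, auto)
  finally show ?thesis .
qed

lemma SP_PiE: "SP p n G e0 = (\<Sum>idx\<in>PiE {1..n} (\<lambda>_. {1..p}). G (\<lambda>i. if i < n then idx (i+1) else e0 (i-n)))"
proof (induction n arbitrary: e0)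
  case 0 then show ?case by simp
next
  case (Suc n)
  have ins: "{1..Suc n} = insert (Suc n) {1..n}" by auto
  have "SP p (Suc n) G e0 = (\<Sum>x=1..p. \<Sum>idx\<in>PiE {1..n} (\<lambda>_. {1..p}). G (\<lambda>i. if i < n then idx (i+1) else case_nat x e0 (i-n)))"
    by (simp add: Suc)
  also have "\<dots> = (\<Sum>x=1..p. \<Sum>idx\<in>PiE {1..n} (\<lambda>_. {1..p}). G (\<lambda>i. if i < Suc n then (idx(Suc n := x)) (i+1) else e0 (i - Suc n)))"
  proof (intro sum.cong refl arg_cong[where f=G] ext)
    fix x idx i
    show "(if i < n then idx (i+1) else case_nat x e0 (i-n)) = (if i < Suc n then (idx(Suc n := x)) (i+1) else e0 (i - Suc n))"
    proof (cases "i < n")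
      case True then show ?thesis by simp
    next
      case False
      show ?thesis
      proof (cases "i = n")
        case True then show ?thesis by simp
      next
        case ne: False
        have "i - n = Suc (i - Suc n)" using False ne by arith
        then show ?thesis using False ne by simp
      qed
    qed
  qed
  also have "\<dots> = (\<Sum>idx\<in>PiE {1..Suc n} (\<lambda>_. {1..p}). G (\<lambda>i. if i < Suc n then idx (i+1) else e0 (i - Suc n)))"
    unfolding ins by (subst sum_PiE_insert) (auto intro: finite_PiE)
  finally show ?case .
qed

lemma Wt_SP: "Wt Ms F \<Longrightarrow> Wt Ms (\<lambda>H p eH eP w. SP p n (\<lambda>e. F H p eH e w) eP)"
proof (induction n)
  case 0 then show ?case by simp
next
  case (Suc n)
  show ?case using W_sP[OF Suc.IH[OF Suc.prems]] by simp
qed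

lemma good_cong: "good f \<Longrightarrow> (\<And>H p s eH eP. f H p s eH eP = g H p s eH eP) \<Longrightarrow> good g"
proof -
  assume "good f" "\<And>H p s eH eP. f H p s eH eP = g H p s eH eP"
  moreover have "f = g" using calculation(2) by (intro ext) auto
  ultimately show ?thesis by simp
qed

lemma good_prod: "finite A \<Longrightarrow> (\<forall>j\<in>A. good (f j)) \<Longrightarrow> good (\<lambda>H p s eH eP. \<Prod>j\<in>A. f j H p s eH eP)"
proof (induction rule: finite_induct)
  case empty then show ?case by (simp add: g_const)
next
  case (insert x F)
  then show ?case by (simp add: g_mult)
qed

definition tpl :: "nat \<Rightarrow> (nat \<Rightarrow> nat) \<Rightarrow> nat \<Rightarrow> nat" where
  "tpl \<nu> e = restrict (\<lambda>m. e (m - 1)) {1..\<nu>}"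

lemma good_tv: "fvar_ok \<nu> v \<Longrightarrow> good (\<lambda>H p s eH eP. target_val H p (tpl \<nu> eP) v)"
proof (cases v)
  case VarH then show ?thesis by (simp add: target_val_def g_H)
next
  case Varp then show ?thesis by (simp add: target_val_def g_p)
next
  case (Vari m)
  assume "fvar_ok \<nu> v"
  then have "m \<in> {1..\<nu>}" using Vari by (simp add: fvar_ok_def)
  then show ?thesis using Vari by (intro good_cong[OF g_eP[of "m - 1"]]) (simp add: target_val_def tpl_def)
next
  case (Vdelta a b)
  assume "fvar_ok \<nu> v"
  then have "a \<in> {1..\<nu>}" "b \<in> {1..\<nu>}" using Vdelta by (auto simp: fvar_ok_def)
  then show ?thesis using Vdelta by (intro good_cong[OF g_dP[of "a - 1" "b - 1"]]) (simp add: target_val_def tpl_def)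
qed

lemma good_target:
  assumes "\<forall>m\<in>Poly_Mapping.keys Q. \<forall>v\<in>Poly_Mapping.keys m. fvar_ok \<nu> v"
  shows "good (\<lambda>H p s eH eP. target Q H p (tpl \<nu> eP))"
proof -
  have "good (\<lambda>H p s eH eP. \<Sum>mo\<in>Poly_Mapping.keys Q. Poly_Mapping.lookup Q mo *
      (\<Prod>v\<in>Poly_Mapping.keys mo. target_val H p (tpl \<nu> eP) v ^ Poly_Mapping.lookup mo v))"
    using assms by (intro good_sum ballI g_mult g_const good_prod good_pow good_tv) auto
  then show ?thesis unfolding target_def poly_eval_def mono_eval_def .
qed

definition mcf :: "scenario \<Rightarrow> nat \<Rightarrow> nat" where
  "mcf sc m = (case sc of ASYM \<Rightarrow> m | SYM \<Rightarrow> 1)"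

lemma mcf_in: "m \<in> {1..\<nu>} \<Longrightarrow> mcf sc m \<in> Msc sc \<nu>"
  unfolding mcf_def Msc_def by (cases sc) auto

lemma model_tpl: "model sc H \<nu> w (tpl \<nu> e) = (\<Sum>x=1..H. \<Prod>m\<in>{1..\<nu>}. w (x, e (m - 1), mcf sc m))"
  unfolding model_def weight_def mcf_def tpl_def by (intro sum.cong refl prod.cong) auto

lemma Wt_model: "Wt (Msc sc \<nu>) (\<lambda>H p eH eP w. model sc H \<nu> w (tpl \<nu> eP))"
proof -
  have "Wt (Msc sc \<nu>) (\<lambda>H p eH eP w. \<Prod>m\<in>{1..\<nu>}. w (eH 0, eP (m - 1), mcf sc m))"
    by (intro Wt_prod ballI Wt_atom mcf_in) auto
  from W_sH[OF this] show ?thesis by (simp add: model_tpl)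
qed

definition Lw :: "scenario \<Rightarrow> nat \<Rightarrow> ((fvar \<Rightarrow>\<^sub>0 nat) \<Rightarrow>\<^sub>0 real) \<Rightarrow> wfun" where
  "Lw sc \<nu> Q = (\<lambda>H p eH eP w. 1/2 * SP p \<nu> (\<lambda>e. (model sc H \<nu> w (tpl \<nu> e) - target Q H p (tpl \<nu> e))\<^sup>2) eP)"

lemma Wt_Lw:
  assumes "\<forall>m\<in>Poly_Mapping.keys Q. \<forall>v\<in>Poly_Mapping.keys m. fvar_ok \<nu> v"
  shows "Wt (Msc sc \<nu>) (Lw sc \<nu> Q)"
proof -
  have gt: "good (\<lambda>H p s eH eP. (-1) * target Q H p (tpl \<nu> eP))"
    by (intro g_mult g_const good_target[OF assms])
  have D: "Wt (Msc sc \<nu>) (\<lambda>H p eH eP w. model sc H \<nu> w (tpl \<nu> eP) + (-1) * target Q H p (tpl \<nu> eP))"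
    using W_p[OF Wt_model W_c[OF gt]] by simp
  have "Wt (Msc sc \<nu>) (\<lambda>H p eH eP w. (model sc H \<nu> w (tpl \<nu> eP) + (-1) * target Q H p (tpl \<nu> eP)) *
       (model sc H \<nu> w (tpl \<nu> eP) + (-1) * target Q H p (tpl \<nu> eP)))"
    by (rule Wt_mult[OF D D])
  then have "Wt (Msc sc \<nu>) (\<lambda>H p eH eP w. (model sc H \<nu> w (tpl \<nu> eP) - target Q H p (tpl \<nu> eP))\<^sup>2)"
    by (simp add: power2_eq_square)
  from Wt_scale[OF Wt_SP[OF this], of "1/2" \<nu>] show ?thesis unfolding Lw_def by simp
qed

lemma tpl_ext: "idx \<in> PiE {1..\<nu>} (\<lambda>_. {1..p}) \<Longrightarrow> tpl \<nu> (\<lambda>i. if i < \<nu> then idx (i+1) else e0 (i-\<nu>)) = idx"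
  unfolding tpl_def by (rule ext) (auto simp: PiE_def extensional_def)

lemma Lw_loss: "Lw sc \<nu> Q H p eH eP w = loss sc H p \<nu> Q w"
proof -
  have "SP p \<nu> (\<lambda>e. (model sc H \<nu> w (tpl \<nu> e) - target Q H p (tpl \<nu> e))\<^sup>2) eP
      = (\<Sum>idx\<in>tuples \<nu> p. (model sc H \<nu> w idx - target Q H p idx)\<^sup>2)"
    unfolding SP_PiE tuples_def by (intro sum.cong refl) (simp add: tpl_ext)
  then show ?thesis unfolding Lw_def loss_def by simp
qed

lemma Lw_loss_fun: "Lw sc \<nu> Q H p eH eP = loss sc H p \<nu> Q"
  by (rule ext) (rule Lw_loss)



definition GFok :: "scenario \<Rightarrow> nat \<Rightarrow> nat \<Rightarrow> nat \<Rightarrow> ((fvar \<Rightarrow>\<^sub>0 nat) \<Rightarrow>\<^sub>0 real) \<Rightarrow> real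
     \<Rightarrow> ((nat \<times> nat \<times> nat \<Rightarrow> real) \<Rightarrow> real \<Rightarrow> (nat \<times> nat \<times> nat \<Rightarrow> real)) \<Rightarrow> (nat \<times> nat \<times> nat \<Rightarrow> real) \<Rightarrow> real \<Rightarrow> bool" where
  "GFok sc H p \<nu> Q T \<phi> w \<epsilon> \<longleftrightarrow> 0 < \<epsilon> \<and> (\<forall>t\<in>{-\<epsilon><..<\<epsilon>}. \<forall>j\<in>params sc H p \<nu>.
      ((\<lambda>\<tau>. \<phi> w \<tau> j) has_real_derivative (- (1 / T) * partial (loss sc H p \<nu> Q) (\<phi> w t) j)) (at t))"

lemma sum3: "(\<Sum>j\<in>A \<times> B \<times> C. f j) = (\<Sum>x\<in>A. \<Sum>y\<in>B. \<Sum>m\<in>C. (f (x, y, m) :: real))"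
  by (simp add: sum.cartesian_product)

lemma dyn:
  assumes Qok: "\<forall>m\<in>Poly_Mapping.keys Q. \<forall>v\<in>Poly_Mapping.keys m. fvar_ok \<nu> v"
  shows "\<exists>E. Wt (Msc sc \<nu>) E \<and> (\<forall>H p T \<phi> w \<epsilon> t eH eP. 1 \<le> H \<longrightarrow> 1 \<le> p \<longrightarrow> 0 < T \<longrightarrow>
     GFok sc H p \<nu> Q T \<phi> w \<epsilon> \<longrightarrow> t \<in> {-\<epsilon><..<\<epsilon>} \<longrightarrow> wfe H eH \<longrightarrow> wfe p eP \<longrightarrow>
     (deriv ^^ k) (\<lambda>t. loss sc H p \<nu> Q (\<phi> w t)) t = E H p eH eP (\<phi> w t) / T ^ k)"
proof (induction k)
  case 0
  show ?case by (intro exI[of _ "Lw sc \<nu> Q"] conjI Wt_Lw[OF Qok]) (simp add: Lw_loss)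
next
  case (Suc k)
  then obtain E where E: "Wt (Msc sc \<nu>) E"
    and Ek: "\<And>H p T \<phi> w \<epsilon> t eH eP. 1 \<le> H \<Longrightarrow> 1 \<le> p \<Longrightarrow> 0 < T \<Longrightarrow>
     GFok sc H p \<nu> Q T \<phi> w \<epsilon> \<Longrightarrow> t \<in> {-\<epsilon><..<\<epsilon>} \<Longrightarrow> wfe H eH \<Longrightarrow> wfe p eP \<Longrightarrow>
     (deriv ^^ k) (\<lambda>t. loss sc H p \<nu> Q (\<phi> w t)) t = E H p eH eP (\<phi> w t) / T ^ k" by blast
  define DE where "DE m = (\<lambda>H p eH eP w. partial (E H p (eH \<circ> Suc) (eP \<circ> Suc)) w (eH 0, eP 0, m))" for m
  define DL where "DL m = (\<lambda>H p eH eP w. partial (Lw sc \<nu> Q H p (eH \<circ> Suc) (eP \<circ> Suc)) w (eH 0, eP 0, m))" for m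
  have WDE: "Wt (Msc sc \<nu>) (DE m)" for m
    unfolding DE_def by (rule Wt_cong[OF Wt_partial[where a=0 and b=0 and m=m, OF Wt_reindex[where ?r1.0=Suc and ?r2.0=Suc, OF E]]]) simp
  have WDL: "Wt (Msc sc \<nu>) (DL m)" for m
    unfolding DL_def by (rule Wt_cong[OF Wt_partial[where a=0 and b=0 and m=m, OF Wt_reindex[where ?r1.0=Suc and ?r2.0=Suc, OF Wt_Lw[OF Qok]]]]) simp
  define E' where "E' = (\<lambda>H p eH eP w. (-1) * (\<Sum>x=1..H. \<Sum>y=1..p. \<Sum>m\<in>Msc sc \<nu>.
        DE m H p (case_nat x eH) (case_nat y eP) w * DL m H p (case_nat x eH) (case_nat y eP) w))"
  have WE': "Wt (Msc sc \<nu>) E'"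
  proof -
    have "Wt (Msc sc \<nu>) (\<lambda>H p eH eP w. \<Sum>m\<in>Msc sc \<nu>. DE m H p eH eP w * DL m H p eH eP w)"
      by (intro Wt_sum finite_Msc ballI Wt_mult WDE WDL)
    from Wt_scale[OF W_sH[OF W_sP[OF this]], of "-1"] show ?thesis unfolding E'_def by simp
  qed
  show ?case
  proof (intro exI[of _ E'] conjI WE' allI impI)
    fix H p T \<phi> w \<epsilon> t eH eP
    assume a: "1 \<le> H" "1 \<le> p" "0 < (T::real)" "GFok sc H p \<nu> Q T \<phi> w \<epsilon>" "t \<in> {-\<epsilon><..<\<epsilon>}" "wfe H eH" "wfe p eP"
    let ?f = "\<lambda>t. loss sc H p \<nu> Q (\<phi> w t)"
    let ?S = "{1..H} \<times> {1..p} \<times> Msc sc \<nu>"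
    let ?pE = "\<lambda>j. partial (E H p eH eP) (\<phi> w t) j"
    let ?pL = "\<lambda>j. partial (loss sc H p \<nu> Q) (\<phi> w t) j"
    have psi: "\<forall>j\<in>?S. ((\<lambda>\<tau>. \<phi> w \<tau> j) has_real_derivative (- (1 / T) * ?pL j)) (at t)"
      using a(4,5) unfolding GFok_def params_Msc by blast
    have ch: "((\<lambda>\<tau>. E H p eH eP (\<phi> w \<tau>)) has_real_derivative (\<Sum>j\<in>?S. ?pE j * (- (1 / T) * ?pL j))) (at t)"
      by (rule chain_Wt[OF E finite_Msc a(6,7) psi])
    have ch2: "((\<lambda>\<tau>. E H p eH eP (\<phi> w \<tau>) / T ^ k) has_real_derivative (\<Sum>j\<in>?S. ?pE j * (- (1 / T) * ?pL j)) / T ^ k) (at t)"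
      by (rule DERIV_cdivide[OF ch])
    have ch3: "((deriv ^^ k) ?f has_real_derivative (\<Sum>j\<in>?S. ?pE j * (- (1 / T) * ?pL j)) / T ^ k) (at t)"
    proof (rule has_field_derivative_transform_within_open[OF ch2 _ a(5)])
      show "open {-\<epsilon><..<\<epsilon>}" by simp
      fix \<tau> assume "\<tau> \<in> {-\<epsilon><..<\<epsilon>}"
      then show "E H p eH eP (\<phi> w \<tau>) / T ^ k = (deriv ^^ k) ?f \<tau>"
        using Ek[OF a(1,2,3,4) _ a(6,7)] by simp
    qed
    have "(deriv ^^ Suc k) ?f t = deriv ((deriv ^^ k) ?f) t" by simp
    also have "\<dots> = (\<Sum>j\<in>?S. ?pE j * (- (1 / T) * ?pL j)) / T ^ k" by (rule DERIV_imp_deriv[OF ch3])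
    also have "\<dots> = E' H p eH eP (\<phi> w t) / T ^ Suc k"
    proof -
      have de: "DE m H p (case_nat x eH) (case_nat y eP) w' = partial (E H p eH eP) w' (x, y, m)" for m x y w'
        unfolding DE_def by (simp add: push_Suc)
      have dl: "DL m H p (case_nat x eH) (case_nat y eP) w' = partial (loss sc H p \<nu> Q) w' (x, y, m)" for m x y w'
        unfolding DL_def by (simp add: push_Suc Lw_loss_fun)
      have "E' H p eH eP (\<phi> w t) = (-1) * (\<Sum>j\<in>?S. ?pE j * ?pL j)"
        unfolding E'_def de dl sum3 ..
      moreover have "(\<Sum>j\<in>?S. ?pE j * (- (1 / T) * ?pL j)) = (- (1 / T)) * (\<Sum>j\<in>?S. ?pE j * ?pL j)"
        by (simp add: sum_distrib_left algebra_simps)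
      ultimately show ?thesis using a(3) by (simp add: field_simps)
    qed
    finally show "(deriv ^^ Suc k) ?f t = E' H p eH eP (\<phi> w t) / T ^ Suc k" .
  qed
qed



theorem theorem1:
  fixes \<nu> s :: nat and sc :: scenario and Q :: "(fvar \<Rightarrow>\<^sub>0 nat) \<Rightarrow>\<^sub>0 real"
  assumes "\<nu> \<ge> 2"
    and "\<forall>m\<in>Poly_Mapping.keys Q. \<forall>v\<in>Poly_Mapping.keys m. fvar_ok \<nu> v"
  shows "\<exists>P :: (pvar \<Rightarrow>\<^sub>0 nat) \<Rightarrow>\<^sub>0 real.
           \<forall>(H::nat) (p::nat) (\<sigma>::real) (T::real) \<phi>.
             H \<ge> 1 \<longrightarrow> p \<ge> 1 \<longrightarrow> \<sigma> > 0 \<longrightarrow> T > 0 \<longrightarrow>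
             (sc = SYM \<longrightarrow> sym_tensor \<nu> p (target Q H p)) \<longrightarrow>
             gradient_flow sc H p \<nu> Q T \<phi> \<longrightarrow>
             integrable (init_measure sc H p \<nu> \<sigma>)
               (\<lambda>w. (deriv ^^ s) (\<lambda>t. loss sc H p \<nu> Q (\<phi> w t)) 0) \<and>
             T ^ s * integral\<^sup>L (init_measure sc H p \<nu> \<sigma>)
               (\<lambda>w. (deriv ^^ s) (\<lambda>t. loss sc H p \<nu> Q (\<phi> w t)) 0)
             = poly_eval (pvar_val H p \<sigma>) P"
proof -
  obtain E where E: "Wt (Msc sc \<nu>) E"
    and Es: "\<And>H p T \<phi> w \<epsilon> t eH eP. 1 \<le> H \<Longrightarrow> 1 \<le> p \<Longrightarrow> 0 < T \<Longrightarrow>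
     GFok sc H p \<nu> Q T \<phi> w \<epsilon> \<Longrightarrow> t \<in> {-\<epsilon><..<\<epsilon>} \<Longrightarrow> wfe H eH \<Longrightarrow> wfe p eP \<Longrightarrow>
     (deriv ^^ s) (\<lambda>t. loss sc H p \<nu> Q (\<phi> w t)) t = E H p eH eP (\<phi> w t) / T ^ s"
    using dyn[OF assms(2), of sc s] by blast
  have X: "goodish (EW sc \<nu> E []) \<and> IW sc \<nu> E []" by (rule expect_Wt[OF E]) simp
  then obtain g where g: "good g"
    and gE: "\<And>H p s eH eP. 1 \<le> H \<Longrightarrow> 1 \<le> p \<Longrightarrow> 0 < s \<Longrightarrow> wfe H eH \<Longrightarrow> wfe p eP \<Longrightarrow> EW sc \<nu> E [] H p s eH eP = g H p s eH eP"
    unfolding goodish_def by blast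
  obtain P where P: "\<And>H p s. g H p s (\<lambda>_. 1) (\<lambda>_. 1) = poly_eval (pvar_val H p s) P"
    using good_polyexp[OF g] unfolding polyexp_def by blast
  show ?thesis
  proof (intro exI[of _ P] allI impI)
    fix H p :: nat and \<sigma> T :: real and \<phi>
    assume a: "1 \<le> H" "1 \<le> p" "0 < \<sigma>" "0 < T" "sc = SYM \<longrightarrow> sym_tensor \<nu> p (target Q H p)"
      "gradient_flow sc H p \<nu> Q T \<phi>"
    let ?e = "\<lambda>_::nat. 1::nat"
    have wH: "wfe H ?e" and wP: "wfe p ?e" using a(1,2) by (auto simp: wfe_def)
    have eqf: "(\<lambda>w. (deriv ^^ s) (\<lambda>t. loss sc H p \<nu> Q (\<phi> w t)) 0)
        = (\<lambda>w. (1 / T ^ s) * (E H p ?e ?e w * prod_list (map (\<lambda>t. w (inst ?e ?e t)) [])))"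
    proof (rule ext)
      fix w
      from a(6) have w0: "\<phi> w 0 = w" and "\<exists>\<epsilon>>0. \<forall>t\<in>{-\<epsilon><..<\<epsilon>}. \<forall>j\<in>params sc H p \<nu>.
           ((\<lambda>\<tau>. \<phi> w \<tau> j) has_real_derivative (- (1 / T) * partial (loss sc H p \<nu> Q) (\<phi> w t) j)) (at t)"
        unfolding gradient_flow_def by auto
      then obtain \<epsilon> where "GFok sc H p \<nu> Q T \<phi> w \<epsilon>" unfolding GFok_def by blast
      moreover from this have "0 \<in> {-\<epsilon><..<\<epsilon>}" unfolding GFok_def by simp
      ultimately have "(deriv ^^ s) (\<lambda>t. loss sc H p \<nu> Q (\<phi> w t)) 0 = E H p ?e ?e (\<phi> w 0) / T ^ s"
        using Es[OF a(1,2,4) _ _ wH wP] by blast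
      then show "(deriv ^^ s) (\<lambda>t. loss sc H p \<nu> Q (\<phi> w t)) 0 = (1 / T ^ s) * (E H p ?e ?e w * prod_list (map (\<lambda>t. w (inst ?e ?e t)) []))"
        using w0 by simp
    qed
    have int: "integrable (Mu sc H p \<nu> \<sigma>) (\<lambda>w. E H p ?e ?e w * prod_list (map (\<lambda>t. w (inst ?e ?e t)) []))"
      using X a(1,2,3) wH wP unfolding IW_def by blast
    show "integrable (init_measure sc H p \<nu> \<sigma>) (\<lambda>w. (deriv ^^ s) (\<lambda>t. loss sc H p \<nu> Q (\<phi> w t)) 0) \<and>
          T ^ s * integral\<^sup>L (init_measure sc H p \<nu> \<sigma>) (\<lambda>w. (deriv ^^ s) (\<lambda>t. loss sc H p \<nu> Q (\<phi> w t)) 0)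
          = poly_eval (pvar_val H p \<sigma>) P"
    proof
      show "integrable (init_measure sc H p \<nu> \<sigma>) (\<lambda>w. (deriv ^^ s) (\<lambda>t. loss sc H p \<nu> Q (\<phi> w t)) 0)"
        unfolding eqf init_measure_Mu by (rule integrable_mult_right[OF int])
      have "T ^ s * integral\<^sup>L (init_measure sc H p \<nu> \<sigma>) (\<lambda>w. (deriv ^^ s) (\<lambda>t. loss sc H p \<nu> Q (\<phi> w t)) 0)
          = T ^ s * ((1 / T ^ s) * EW sc \<nu> E [] H p \<sigma> ?e ?e)"
        unfolding eqf init_measure_Mu EW_def by (subst Bochner_Integration.integral_mult_right[OF int]) rule
      also have "\<dots> = EW sc \<nu> E [] H p \<sigma> ?e ?e" using a(4) by simp
      also have "\<dots> = g H p \<sigma> ?e ?e" by (rule gE[OF a(1,2,3) wH wP])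
      also have "\<dots> = poly_eval (pvar_val H p \<sigma>) P" by (rule P)
      finally show "T ^ s * integral\<^sup>L (init_measure sc H p \<nu> \<sigma>) (\<lambda>w. (deriv ^^ s) (\<lambda>t. loss sc H p \<nu> Q (\<phi> w t)) 0)
          = poly_eval (pvar_val H p \<sigma>) P" .
    qed
  qed
qed


end
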